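(* Let $A\in\mathbb{R}^{m\times n}$ with $m<n$, let $x\in\mathbb{R}^n$, $\eta\in\mathbb{R}^m$, $y=Ax+\eta$, let $k\ge1$ be an integer, $S=\mathcal{L}_k(x)$, and let $\sigma_1,\sigma_m$ be the largest and smallest ($m$-th) singular values of $A$. Write $\gamma=\dfrac{1}{3\sqrt{\frac{1+\delta_{3k}}{1-\delta_{3k}}}+1}$. Suppose $\delta_{3k}<0.2119$, $$\epsilon>\max\left\{\sigma_1^2,\ \left(\frac{\sigma_1^2-\sigma_m^2}{\gamma-\delta_{3k}}-1\right)\sigma_1^2\right\},$$ and $$\epsilon+\sigma_1^2+(\delta_{3k}-\gamma)\frac{\epsilon+\sigma_1^2}{\sigma_1^2}<\lambda\le\epsilon+\sigma_m^2 .$$ Let $\{x^p\}$ be a sequence generated by the NTROT algorithm with these $A,y,k,\epsilon,\lambda$. Then for every $p\ge0$ for which $x^p$ is $k$-sparse (in particular for all $p\ge1$, and $p=0$ if $x^0$ is $k$-sparse), $$\|x^{p+1}-x_S\|_2\le\rho\|x^p-x_S\|_2+\tau\|Ax_{\overline S}+\eta\|_2,$$ where $$\rho=\sqrt{\frac{1+\delta_k}{1-\delta_{2k}}}\left(\delta_{2k}+2\delta_{3k}+3\sigma_1^2-\frac{3\lambda\sigma_1^2}{\epsilon+\sigma_1^2}\right)+\delta_{3k}+\sigma_1^2-\frac{\lambda\sigma_1^2}{\epsilon+\sigma_1^2}<1,$$ $$\tau=\frac{1}{\sqrt{1-\delta_{2k}}}\left(\frac{3\lambda\sigma_1\sqrt{1+\delta_k}}{\epsilon+\sigma_1^2}+2\right)+\frac{\lambda\sigma_1}{\epsilon+\sigma_1^2}.$$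 In particular, if $x$ is $k$-sparse and $\eta=0$, then $x^p\to x$ as $p\to\infty$.
   Context: Notation: $\|\cdot\|_2$ is the Euclidean norm; a vector is $k$-sparse if it has at most $k$ nonzero entries. For $\Omega\subseteq\{1,\dots,n\}$, $\overline\Omega$ is its complement and $x_\Omega$ is the vector obtained from $x$ by keeping the entries indexed by $\Omega$ and setting the others to zero. $\mathcal{L}_k(u)$ denotes the index set of the $k$ largest magnitudes of $u$ (ties broken arbitrarily), and $\mathcal{H}_k(u)=u_{\mathcal{L}_k(u)}$ is the hard thresholding operator. $u\otimes w$ is the entrywise (Hadamard) product; $\mathbf e=(1,\dots,1)^T\in\mathbb{R}^n$; $I$ is the $n\times n$ identity; vector inequalities are entrywise. The $q$-th order restricted isometry constant $\delta_q$ of $A$ is the smallest $\delta\ge0$ such that $(1-\delta)\|z\|_2^2\le\|Az\|_2^2\le(1+\delta)\|z\|_2^2$ for all $q$-sparse $z\in\mathbb{R}^n$. NTROT algorithm (Newton-type relaxed optimal $k$-thresholding): given $A$, $y$, $k$, $\epsilon>0$, $\lambda>0$ and an initial point $x^0\in\mathbb{R}^n$, for $p=0,1,2,\dots$ set $u^p=x^p+\lambda(A^TA+\epsilon I)^{-1}A^T(y-Ax^p)$, $w^p\in\arg\min_w\{\|y-A(u^p\otimes w)\|_2^2:\ \mathbf e^Tw=k,\ 0\le w\le\mathbf e\}$, $x^{p+1}=\mathcal{H}_k(u^p\otimes w^p)$. *)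

theory Defs
  imports "HOL-Analysis.Analysis"
begin

definition ksparse :: "nat \<Rightarrow> real^'n \<Rightarrow> bool" where
  "ksparse k z \<longleftrightarrow> card {i. z $ i \<noteq> 0} \<le> k"

definition restr :: "'n set \<Rightarrow> real^'n \<Rightarrow> real^'n" where
  "restr \<Omega> z = (\<chi> i. if i \<in> \<Omega> then z $ i else 0)"

definition hadamard :: "real^'n \<Rightarrow> real^'n \<Rightarrow> real^'n" where
  "hadamard u w = (\<chi> i. u $ i * w $ i)"

text \<open>L is an admissible choice of \<open>\<L>_k(u)\<close>: an index set of the k largest
  magnitudes of u (ties broken arbitrarily).\<close>

definition is_Lk :: "nat \<Rightarrow> real^'n \<Rightarrow> 'n set \<Rightarrow> bool" where
  "is_Lk k u L \<longleftrightarrow> card L = k \<and> (\<forall>i\<in>L. \<forall>j. j \<notin> L \<longrightarrow> \<bar>u $ j\<bar> \<le> \<bar>u $ i\<bar>)"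

definition rip_const :: "real^'n^'m \<Rightarrow> nat \<Rightarrow> real" where
  "rip_const A q = Inf {\<delta>. \<delta> \<ge> 0 \<and> (\<forall>z. ksparse q z \<longrightarrow>
      (1 - \<delta>) * (norm z)\<^sup>2 \<le> (norm (A *v z))\<^sup>2 \<and> (norm (A *v z))\<^sup>2 \<le> (1 + \<delta>) * (norm z)\<^sup>2)}"

text \<open>Singular values: the singular values of an m x n matrix A (m < n) are the square
  roots of the eigenvalues of the m x m matrix A A^T; the largest is sigma_1 and the
  smallest (the m-th) is sigma_m.\<close>

definition mat_eigenvalues :: "real^'m^'m \<Rightarrow> real set" where
  "mat_eigenvalues M = {\<mu>. \<exists>v. v \<noteq> 0 \<and> M *v v = \<mu> *\<^sub>R v}"

definition sigma_max :: "real^'n^'m \<Rightarrow> real" where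
  "sigma_max A = sqrt (Max (mat_eigenvalues (A ** transpose A)))"

definition sigma_min :: "real^'n^'m \<Rightarrow> real" where
  "sigma_min A = sqrt (Min (mat_eigenvalues (A ** transpose A)))"

definition ntrot_u :: "real^'n^'m \<Rightarrow> real^'m \<Rightarrow> real \<Rightarrow> real \<Rightarrow> real^'n \<Rightarrow> real^'n" where
  "ntrot_u A y eps lam xp =
     xp + lam *\<^sub>R (matrix_inv (transpose A ** A + eps *\<^sub>R mat 1) *v (transpose A *v (y - A *v xp)))"

definition ntrot_feasible :: "nat \<Rightarrow> real^'n \<Rightarrow> bool" where
  "ntrot_feasible k w \<longleftrightarrow> sum (\<lambda>i. w $ i) UNIV = real k \<and> (\<forall>i. 0 \<le> w $ i \<and> w $ i \<le> 1)"

definition ntrot_step :: "real^'n^'m \<Rightarrow> real^'m \<Rightarrow> nat \<Rightarrow> real \<Rightarrow> real \<Rightarrow> real^'n \<Rightarrow> real^'n \<Rightarrow> bool" where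
  "ntrot_step A y k eps lam xp xq \<longleftrightarrow>
     (let u = ntrot_u A y eps lam xp in
      \<exists>w L. ntrot_feasible k w \<and>
        (\<forall>w'. ntrot_feasible k w' \<longrightarrow>
           (norm (y - A *v hadamard u w))\<^sup>2 \<le> (norm (y - A *v hadamard u w'))\<^sup>2) \<and>
        is_Lk k (hadamard u w) L \<and> xq = restr L (hadamard u w))"

definition ntrot_seq :: "real^'n^'m \<Rightarrow> real^'m \<Rightarrow> nat \<Rightarrow> real \<Rightarrow> real \<Rightarrow> (nat \<Rightarrow> real^'n) \<Rightarrow> bool" where
  "ntrot_seq A y k eps lam xs \<longleftrightarrow> (\<forall>p. ntrot_step A y k eps lam (xs p) (xs (Suc p)))"

end

theory Submission imports Defs begin

declare transpose_matrix_vector[simp del]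

definition supp :: "real^'n \<Rightarrow> 'n set" where "supp z = {i. z $ i \<noteq> 0}"

lemma ksparse_supp: "ksparse k z \<longleftrightarrow> card (supp z) \<le> k"
  by (simp add: ksparse_def supp_def)

lemma ksparse_subset: "supp z \<subseteq> X \<Longrightarrow> card X \<le> k \<Longrightarrow> ksparse k z"
proof -
  assume a: "supp z \<subseteq> X" "card X \<le> k"
  have "card (supp z) \<le> card X" by (rule card_mono) (use a in auto)
  then show ?thesis using a unfolding ksparse_supp by linarith
qed

lemma restr_nth[simp]: "restr \<Omega> z $ i = (if i \<in> \<Omega> then z $ i else 0)"
  by (simp add: restr_def)

lemma hadamard_nth[simp]: "hadamard u w $ i = u $ i * w $ i"
  by (simp add: hadamard_def)

lemma tdot: "(transpose A *v x) \<bullet> y = x \<bullet> ((A::real^'n^'m) *v y)"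
  by (simp add: transpose_matrix_vector dot_lmul_matrix)

lemma norm_sq_sum: "(norm (z::real^'n))\<^sup>2 = (\<Sum>i\<in>UNIV. (z$i)\<^sup>2)"
  unfolding norm_vec_def L2_set_def
  by (subst real_sqrt_pow2) (auto intro: sum_nonneg)

lemma norm_restr_sq: "(norm (restr \<Omega> z))\<^sup>2 = (\<Sum>i\<in>\<Omega>. (z$i)\<^sup>2)"
proof -
  have "(norm (restr \<Omega> z))\<^sup>2 = (\<Sum>i\<in>UNIV. (if i \<in> \<Omega> then (z$i)\<^sup>2 else 0))"
    unfolding norm_sq_sum by (rule sum.cong) auto
  also have "\<dots> = (\<Sum>i\<in>\<Omega>. (z$i)\<^sup>2)"
    by (simp add: sum.If_cases)
  finally show ?thesis .
qed

lemma norm_restr_mono: "\<Omega> \<subseteq> \<Omega>' \<Longrightarrow> norm (restr \<Omega> z) \<le> norm (restr \<Omega>' z)"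
proof -
  assume "\<Omega> \<subseteq> \<Omega>'"
  then have "(\<Sum>i\<in>\<Omega>. (z$i)\<^sup>2) \<le> (\<Sum>i\<in>\<Omega>'. (z$i)\<^sup>2)"
    by (intro sum_mono2) auto
  then have "(norm (restr \<Omega> z))\<^sup>2 \<le> (norm (restr \<Omega>' z))\<^sup>2" unfolding norm_restr_sq .
  then show ?thesis by (rule power2_le_imp_le) simp
qed

lemma restr_UNIV[simp]: "restr UNIV z = z" by (simp add: vec_eq_iff)

lemma norm_restr_le: "norm (restr \<Omega> z) \<le> norm z"
  using norm_restr_mono[of \<Omega> UNIV z] by simp

lemma restr_add: "restr \<Omega> (a + b) = restr \<Omega> a + restr \<Omega> b"
  by (simp add: vec_eq_iff)
lemma restr_diff: "restr \<Omega> (a - b) = restr \<Omega> a - restr \<Omega> b"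
  by (simp add: vec_eq_iff)
lemma restr_scaleR: "restr \<Omega> (c *\<^sub>R a) = c *\<^sub>R restr \<Omega> a"
  by (simp add: vec_eq_iff)

lemma supp_restr: "supp (restr \<Omega> z) \<subseteq> \<Omega>"
  by (auto simp: supp_def)

lemma supp_add: "supp (a + b) \<subseteq> supp a \<union> supp b"
  by (auto simp: supp_def)
lemma supp_diff: "supp (a - b) \<subseteq> supp a \<union> supp b"
  by (auto simp: supp_def)
lemma supp_scaleR: "supp (c *\<^sub>R a) \<subseteq> supp a"
  by (auto simp: supp_def)

definition ripset :: "real^'n^'m \<Rightarrow> nat \<Rightarrow> real set" where
  "ripset A q = {\<delta>. \<delta> \<ge> 0 \<and> (\<forall>z. ksparse q z \<longrightarrow>
      (1 - \<delta>) * (norm z)\<^sup>2 \<le> (norm (A *v z))\<^sup>2 \<and> (norm (A *v z))\<^sup>2 \<le> (1 + \<delta>) * (norm z)\<^sup>2)}"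

lemma rip_const_eq: "rip_const A q = Inf (ripset A q)"
  by (simp add: rip_const_def ripset_def)

lemma ripset_nonempty: "ripset (A::real^'n^'m) q \<noteq> {}"
proof -
  have "bounded_linear ((*v) A)" by (rule matrix_vector_mul_bounded_linear)
  then obtain K where K: "K > 0" "\<And>x. norm (A *v x) \<le> norm x * K"
    using bounded_linear.pos_bounded by blast
  define d where "d = max 1 (K\<^sup>2)"
  have "d \<in> ripset A q"
    unfolding ripset_def
  proof (safe)
    show "0 \<le> d" by (simp add: d_def)
  next
    fix z :: "real^'n"
    have "(1 - d) * (norm z)\<^sup>2 \<le> 0" by (simp add: d_def mult_nonpos_nonneg)
    then show "(1 - d) * (norm z)\<^sup>2 \<le> (norm (A *v z))\<^sup>2" by (meson order_trans zero_le_power2)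
    have "norm (A *v z) \<le> norm z * K" by (rule K)
    then have "(norm (A *v z))\<^sup>2 \<le> (norm z * K)\<^sup>2" by (simp add: power_mono)
    also have "\<dots> = K\<^sup>2 * (norm z)\<^sup>2" by (simp add: power_mult_distrib)
    also have "\<dots> \<le> (1 + d) * (norm z)\<^sup>2" by (intro mult_right_mono) (auto simp: d_def)
    finally show "(norm (A *v z))\<^sup>2 \<le> (1 + d) * (norm z)\<^sup>2" .
  qed
  then show ?thesis by blast
qed

lemma ripset_bdd: "bdd_below (ripset A q)"
  by (rule bdd_belowI[of _ 0]) (simp add: ripset_def)

lemma rip_nonneg: "0 \<le> rip_const A q"
  unfolding rip_const_eq using ripset_nonempty
  by (intro cInf_greatest) (auto simp: ripset_def)

lemma rip_mono: "q \<le> q' \<Longrightarrow> rip_const A q \<le> rip_const A q'"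
  unfolding rip_const_eq
proof (rule cInf_superset_mono[OF ripset_nonempty ripset_bdd])
  assume "q \<le> q'"
  then show "ripset A q' \<subseteq> ripset A q"
    unfolding ripset_def ksparse_def by auto
qed

lemma eps_le_aux:
  fixes X Y d0 :: real
  assumes X0: "X \<ge> 0"
    and key: "\<And>e. e > 0 \<Longrightarrow> \<exists>d. d < d0 + e \<and> (1 - d) * X \<le> Y \<and> Y \<le> (1 + d) * X"
  shows "(1 - d0) * X \<le> Y \<and> Y \<le> (1 + d0) * X"
proof -
  have 1: "(1 - d0) * X \<le> Y + e" and 2: "Y \<le> (1 + d0) * X + e" if e: "e > 0" for e
  proof -
    have e': "e / (X + 1) > 0" using e X0 by simp
    obtain d where d: "d < d0 + e / (X + 1)" "(1 - d) * X \<le> Y" "Y \<le> (1 + d) * X"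
      using key[OF e'] by auto
    have "d * X \<le> (d0 + e / (X + 1)) * X" using d(1) X0 by (intro mult_right_mono) auto
    moreover have "e / (X + 1) * X \<le> e" using e X0 by (simp add: divide_simps)
    ultimately have dd: "d * X \<le> d0 * X + e" by (simp add: distrib_right)
    have "(d0 + e / (X + 1)) * X \<ge> d * X" using d(1) X0 by (intro mult_right_mono) auto
    show "(1 - d0) * X \<le> Y + e" using d(2) dd \<open>e / (X + 1) * X \<le> e\<close> \<open>(d0 + e / (X + 1)) * X \<ge> d * X\<close>
      by (simp add: algebra_simps)
    show "Y \<le> (1 + d0) * X + e" using d(3) dd by (simp add: algebra_simps)
  qed
  have "(1 - d0) * X \<le> Y" by (rule field_le_epsilon) (rule 1)
  moreover have "Y \<le> (1 + d0) * X" by (rule field_le_epsilon) (rule 2)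
  ultimately show ?thesis by blast
qed

lemma rip_bounds:
  fixes A :: "real^'n^'m"
  assumes "ksparse q z"
  shows "(1 - rip_const A q) * (norm z)\<^sup>2 \<le> (norm (A *v z))\<^sup>2 \<and>
         (norm (A *v z))\<^sup>2 \<le> (1 + rip_const A q) * (norm z)\<^sup>2"
proof (rule eps_le_aux)
  show "(norm z)\<^sup>2 \<ge> 0" by simp
  fix e :: real assume "e > 0"
  then have "Inf (ripset A q) < rip_const A q + e" by (simp add: rip_const_eq)
  then obtain d where "d \<in> ripset A q" "d < rip_const A q + e"
    using cInf_lessD[OF ripset_nonempty] by blast
  then show "\<exists>d. d < rip_const A q + e \<and> (1 - d) * (norm z)\<^sup>2 \<le> (norm (A *v z))\<^sup>2 \<and>
      (norm (A *v z))\<^sup>2 \<le> (1 + d) * (norm z)\<^sup>2"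
    using assms unfolding ripset_def by auto
qed

lemma nsq_add: "(norm (x + y))\<^sup>2 = (norm x)\<^sup>2 + 2 * (x \<bullet> y) + (norm (y::'a::real_inner))\<^sup>2"
  by (simp add: power2_norm_eq_inner inner_add_left inner_add_right inner_commute)
lemma nsq_diff: "(norm (x - y))\<^sup>2 = (norm x)\<^sup>2 - 2 * (x \<bullet> y) + (norm (y::'a::real_inner))\<^sup>2"
  by (simp add: power2_norm_eq_inner inner_diff_left inner_diff_right inner_commute)

lemma rip_inner_half:
  fixes A :: "real^'n^'m"
  assumes "supp u \<subseteq> X" "supp v \<subseteq> X" "card X \<le> q"
  shows "(A *v u) \<bullet> (A *v v) - u \<bullet> v \<le> rip_const A q * ((norm u)\<^sup>2 + (norm v)\<^sup>2) / 2"
proof -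
  let ?d = "rip_const A q"
  have sp: "ksparse q (u + v)" "ksparse q (u - v)"
    using supp_add[of u v] supp_diff[of u v] assms by (auto intro!: ksparse_subset[of _ X])
  have 1: "(norm (A *v (u + v)))\<^sup>2 \<le> (1 + ?d) * (norm (u + v))\<^sup>2"
    using rip_bounds[OF sp(1), of A] by blast
  have 2: "(1 - ?d) * (norm (u - v))\<^sup>2 \<le> (norm (A *v (u - v)))\<^sup>2"
    using rip_bounds[OF sp(2), of A] by blast
  have e1: "(norm (A *v (u + v)))\<^sup>2 = (norm (A *v u))\<^sup>2 + 2 * ((A *v u) \<bullet> (A *v v)) + (norm (A *v v))\<^sup>2"
    by (simp add: matrix_vector_right_distrib nsq_add)
  have e2: "(norm (A *v (u - v)))\<^sup>2 = (norm (A *v u))\<^sup>2 - 2 * ((A *v u) \<bullet> (A *v v)) + (norm (A *v v))\<^sup>2"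
    by (simp add: matrix_vector_mult_diff_distrib nsq_diff)
  have e3: "(norm (u + v))\<^sup>2 = (norm u)\<^sup>2 + 2 * (u \<bullet> v) + (norm v)\<^sup>2" by (rule nsq_add)
  have e4: "(norm (u - v))\<^sup>2 = (norm u)\<^sup>2 - 2 * (u \<bullet> v) + (norm v)\<^sup>2" by (rule nsq_diff)
  from 1 2 show ?thesis unfolding e1 e2 e3 e4 by (simp add: algebra_simps)
qed

lemma mv_neg: "(A::real^'n^'m) *v (- x) = - (A *v x)"
  using matrix_vector_mult_diff_distrib[of A 0 x] by simp

lemma rip_inner:
  fixes A :: "real^'n^'m"
  assumes "supp u \<subseteq> X" "supp v \<subseteq> X" "card X \<le> q"
  shows "\<bar>(A *v u) \<bullet> (A *v v) - u \<bullet> v\<bar> \<le> rip_const A q * norm u * norm v"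
proof (cases "u = 0 \<or> v = 0")
  case True then show ?thesis by auto
next
  case False
  let ?d = "rip_const A q"
  have nu: "norm u > 0" and nv: "norm v > 0" using False by auto
  define a where "a = sqrt (norm v / norm u)"
  define b where "b = sqrt (norm u / norm v)"
  have a0: "a > 0" and b0: "b > 0" using nu nv by (auto simp: a_def b_def)
  have ab: "a * b = 1" using nu nv by (simp add: a_def b_def real_sqrt_mult[symmetric])
  have a2: "a\<^sup>2 * (norm u)\<^sup>2 = norm u * norm v" using nu nv by (simp add: a_def power2_eq_square)
  have b2: "b\<^sup>2 * (norm v)\<^sup>2 = norm u * norm v" using nu nv by (simp add: b_def power2_eq_square)
  have s1: "supp (a *\<^sub>R u) \<subseteq> X" "supp (b *\<^sub>R v) \<subseteq> X" "supp (- a *\<^sub>R u) \<subseteq> X"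
    using assms supp_scaleR by blast+
  note h1 = rip_inner_half[OF s1(1) s1(2) assms(3), of A]
  note h2 = rip_inner_half[OF s1(3) s1(2) assms(3), of A]
  have eq1: "(A *v (a *\<^sub>R u)) \<bullet> (A *v (b *\<^sub>R v)) - (a *\<^sub>R u) \<bullet> (b *\<^sub>R v)
      = (a * b) * ((A *v u) \<bullet> (A *v v) - u \<bullet> v)"
    by (simp add: matrix_scaleR_vector_ac scaleR_matrix_vector_assoc[symmetric] algebra_simps)
  have eq2: "(A *v (- a *\<^sub>R u)) \<bullet> (A *v (b *\<^sub>R v)) - (- a *\<^sub>R u) \<bullet> (b *\<^sub>R v)
      = - (a * b) * ((A *v u) \<bullet> (A *v v) - u \<bullet> v)"
    by (simp add: mv_neg matrix_scaleR_vector_ac scaleR_matrix_vector_assoc[symmetric] algebra_simps)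
  have n1: "(norm (a *\<^sub>R u))\<^sup>2 + (norm (b *\<^sub>R v))\<^sup>2 = 2 * (norm u * norm v)"
    using a2 b2 a0 b0 by (simp add: power_mult_distrib)
  have n2: "(norm (- a *\<^sub>R u))\<^sup>2 + (norm (b *\<^sub>R v))\<^sup>2 = 2 * (norm u * norm v)"
    using a2 b2 a0 b0 by (simp add: power_mult_distrib)
  from h1 h2 show ?thesis unfolding eq1 eq2 n1 n2 ab by (simp add: abs_le_iff)
qed

lemma rip_restr_bound:
  fixes A :: "real^'n^'m" and z :: "real^'n"
  assumes "card (\<Omega> \<union> supp z) \<le> q"
  shows "norm (restr \<Omega> (z - transpose A *v (A *v z))) \<le> rip_const A q * norm z"
proof -
  define g where "g = restr \<Omega> (z - transpose A *v (A *v z))"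
  have "(norm g)\<^sup>2 = g \<bullet> (z - transpose A *v (A *v z))"
    unfolding g_def power2_norm_eq_inner inner_vec_def
    by (rule sum.cong) (auto simp: power2_eq_square)
  also have "\<dots> = g \<bullet> z - (A *v g) \<bullet> (A *v z)"
  proof -
    have "g \<bullet> (transpose A *v (A *v z)) = (A *v g) \<bullet> (A *v z)"
      using tdot[of A "A *v z" g] by (metis inner_commute)
    then show ?thesis by (simp only: inner_diff_right)
  qed
  also have "\<dots> \<le> rip_const A q * norm g * norm z"
    using rip_inner[of g "\<Omega> \<union> supp z" z q A] assms supp_restr[of \<Omega>] unfolding g_def
    by (auto simp: abs_le_iff)
  finally have "(norm g)\<^sup>2 \<le> rip_const A q * norm z * norm g" by (simp add: algebra_simps)
  then show ?thesis unfolding g_def[symmetric] using rip_nonneg[of A q]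
    by (cases "norm g = 0") (auto simp: power2_eq_square mult_le_cancel_right)
qed

section \<open>Spectral facts\<close>

lemma C_apply: "((A::real^'n^'m) ** transpose A) *v q = A *v (transpose A *v q)"
  by (simp add: matrix_vector_mul_assoc)

lemma C_quad: "q \<bullet> (((A::real^'n^'m) ** transpose A) *v q) = (norm (transpose A *v q))\<^sup>2"
  unfolding C_apply power2_norm_eq_inner by (rule tdot[symmetric])

lemma C_bil: "r \<bullet> (((A::real^'n^'m) ** transpose A) *v q) = (transpose A *v r) \<bullet> (transpose A *v q)"
  unfolding C_apply by (rule tdot[symmetric])

lemma quad0:
  fixes a b :: real
  assumes "\<And>t. a * t + b * t\<^sup>2 \<le> 0"
  shows "a = 0"
proof (rule ccontr)
  assume a: "a \<noteq> 0"
  define s where "s = 1 / (2 * (\<bar>b\<bar> + 1))"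
  have s0: "s > 0" by (simp add: s_def)
  have bs: "\<bar>b\<bar> * s \<le> 1/2" unfolding s_def by (simp add: divide_simps)
  have "b * s\<^sup>2 \<ge> - \<bar>b\<bar> * s\<^sup>2" by (intro mult_right_mono) auto
  also have "- \<bar>b\<bar> * s\<^sup>2 = - (\<bar>b\<bar> * s) * s" by (simp add: power2_eq_square)
  finally have "b * s\<^sup>2 \<ge> - (\<bar>b\<bar> * s) * s" .
  also have "- (\<bar>b\<bar> * s) * s \<ge> - (1/2) * s" using bs s0 by (intro mult_right_mono) auto
  finally have "s + b * s\<^sup>2 \<ge> s / 2" by simp
  then have pos: "s + b * s\<^sup>2 > 0" using s0 by linarith
  have "a * (s * a) + b * (s * a)\<^sup>2 = a\<^sup>2 * (s + b * s\<^sup>2)"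
    by (simp add: power2_eq_square algebra_simps)
  moreover have "a\<^sup>2 > 0" using a by simp
  ultimately have "a * (s * a) + b * (s * a)\<^sup>2 > 0" using pos by simp
  with assms[of "s * a"] show False by linarith
qed

lemma eig_from_ext:
  fixes A :: "real^'n^'m"
  assumes ext: "\<And>q. c * ((norm (transpose A *v q))\<^sup>2 - \<mu> * (norm q)\<^sup>2) \<le> 0"
    and c: "c \<noteq> 0" and q0: "(norm (transpose A *v q0))\<^sup>2 = \<mu> * (norm q0)\<^sup>2"
  shows "(A ** transpose A) *v q0 = \<mu> *\<^sub>R q0"
proof -
  let ?B = "transpose A"
  have lin: "(transpose A *v (q0 + t *\<^sub>R r)) = ?B *v q0 + t *\<^sub>R (?B *v r)" for t r
    by (simp add: matrix_vector_right_distrib matrix_scaleR_vector_ac scaleR_matrix_vector_assoc)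
  have X: "(?B *v q0) \<bullet> (?B *v r) = \<mu> * (q0 \<bullet> r)" for r
  proof -
    let ?X = "(?B *v q0) \<bullet> (?B *v r) - \<mu> * (q0 \<bullet> r)"
    let ?Y = "(norm (?B *v r))\<^sup>2 - \<mu> * (norm r)\<^sup>2"
    have "(c * 2 * ?X) * t + (c * ?Y) * t\<^sup>2 \<le> 0" for t
    proof -
      have h: "c * ((norm (?B *v (q0 + t *\<^sub>R r)))\<^sup>2 - \<mu> * (norm (q0 + t *\<^sub>R r))\<^sup>2) \<le> 0" by (rule ext)
      have eq: "(norm (?B *v (q0 + t *\<^sub>R r)))\<^sup>2 - \<mu> * (norm (q0 + t *\<^sub>R r))\<^sup>2
          = 2 * ?X * t + ?Y * t\<^sup>2"
        unfolding lin nsq_add using q0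
        by (simp add: power_mult_distrib power2_eq_square algebra_simps)
      have "(c * 2 * ?X) * t + (c * ?Y) * t\<^sup>2 = c * (2 * ?X * t + ?Y * t\<^sup>2)" by (simp add: algebra_simps)
      then show ?thesis using h unfolding eq by linarith
    qed
    then have "c * 2 * ?X = 0" by (rule quad0)
    with c show ?thesis by simp
  qed
  define r where "r = (A ** transpose A) *v q0 - \<mu> *\<^sub>R q0"
  have "r \<bullet> ((A ** transpose A) *v q0) = r \<bullet> (\<mu> *\<^sub>R q0)"
    unfolding C_bil using X[of r] by (simp add: inner_commute)
  then have "r \<bullet> r = 0" unfolding r_def by (simp add: inner_diff_right)
  then show ?thesis unfolding r_def by simp
qed

lemma Q_scale: "(norm (transpose (A::real^'n^'m) *v (c *\<^sub>R q)))\<^sup>2 = c\<^sup>2 * (norm (transpose A *v q))\<^sup>2"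
  by (simp add: matrix_scaleR_vector_ac scaleR_matrix_vector_assoc[symmetric] power_mult_distrib)

lemma Q_cont: "continuous_on S (\<lambda>q. (norm (transpose (A::real^'n^'m) *v q))\<^sup>2)"
  by (intro continuous_intros linear_continuous_on matrix_vector_mul_linear bounded_linear_intros)
    (simp add: matrix_vector_mul_bounded_linear)

lemma sphere_ext:
  fixes f :: "real^'m \<Rightarrow> real"
  assumes hom: "\<And>c q. f (c *\<^sub>R q) = c\<^sup>2 * f q"
    and ineq: "\<And>q. norm q = 1 \<Longrightarrow> s * f q \<le> s * f q0"
    and s: "s \<noteq> 0"
  shows "s * f q \<le> s * (f q0 * (norm q)\<^sup>2)"
proof (cases "q = 0")
  case True
  then have "f q = 0" using hom[of 0 q] by simp
  then show ?thesis using True by simp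
next
  case False
  let ?q' = "(1 / norm q) *\<^sub>R q"
  have "norm ?q' = 1" using False by simp
  then have le: "s * f ?q' \<le> s * f q0" by (rule ineq)
  have qq: "norm q *\<^sub>R ?q' = q" using False by simp
  have e: "f (norm q *\<^sub>R ?q') = (norm q)\<^sup>2 * f ?q'" by (rule hom)
  have fq: "f q = (norm q)\<^sup>2 * f ?q'" using e unfolding qq .
  have "s * f q = (norm q)\<^sup>2 * (s * f ?q')" unfolding fq by (simp only: mult_ac)
  also have "\<dots> \<le> (norm q)\<^sup>2 * (s * f q0)" using le by (rule mult_left_mono) simp
  also have "\<dots> = s * (f q0 * (norm q)\<^sup>2)" by (simp only: mult_ac)
  finally show ?thesis .
qed

lemma exists_ext:
  fixes A :: "real^'n^'m" and s :: real
  assumes s: "s = 1 \<or> s = -1"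
  shows "\<exists>q0. norm q0 = 1 \<and> (\<forall>q. s * (norm (transpose A *v q))\<^sup>2 \<le> s * ((norm (transpose A *v q0))\<^sup>2 * (norm q)\<^sup>2))"
proof -
  let ?f = "\<lambda>q. (norm (transpose A *v q))\<^sup>2"
  have ne: "sphere (0::real^'m) 1 \<noteq> {}" by simp
  obtain q0 where q0: "q0 \<in> sphere 0 1" "\<forall>y\<in>sphere 0 1. s * ?f y \<le> s * ?f q0"
  proof (cases "s = 1")
    case True
    obtain q0 where "q0 \<in> sphere 0 1" "\<forall>y\<in>sphere 0 1. ?f y \<le> ?f q0"
      using continuous_attains_sup[OF compact_sphere ne Q_cont] by blast
    then show ?thesis using that True by auto
  next
    case False
    then have s': "s = -1" using s by auto
    obtain q0 where "q0 \<in> sphere 0 1" "\<forall>y\<in>sphere 0 1. ?f q0 \<le> ?f y"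
      using continuous_attains_inf[OF compact_sphere ne Q_cont] by blast
    then show ?thesis using that s' by auto
  qed
  have "s \<noteq> 0" using s by auto
  then have "s * ?f q \<le> s * (?f q0 * (norm q)\<^sup>2)" for q
    using sphere_ext[of ?f s q0 q] Q_scale[of A] q0(2) by auto
  moreover have "norm q0 = 1" using q0(1) by simp
  ultimately show ?thesis by blast
qed

lemma eig_ext:
  fixes A :: "real^'n^'m" and s :: real
  assumes s: "s = 1 \<or> s = -1"
  shows "\<exists>\<mu>\<in>mat_eigenvalues (A ** transpose A). \<forall>q. s * (norm (transpose A *v q))\<^sup>2 \<le> s * (\<mu> * (norm q)\<^sup>2)"
proof -
  obtain q0 where q0: "norm q0 = 1" "\<forall>q. s * (norm (transpose A *v q))\<^sup>2 \<le> s * ((norm (transpose A *v q0))\<^sup>2 * (norm q)\<^sup>2)"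
    using exists_ext[OF s, of A] by blast
  let ?\<mu> = "(norm (transpose A *v q0))\<^sup>2"
  have "(A ** transpose A) *v q0 = ?\<mu> *\<^sub>R q0"
  proof (rule eig_from_ext[of s])
    show "s * ((norm (transpose A *v q))\<^sup>2 - ?\<mu> * (norm q)\<^sup>2) \<le> 0" for q
      using q0(2)[rule_format, of q] by (simp add: algebra_simps)
    show "s \<noteq> 0" using s by auto
    show "?\<mu> = ?\<mu> * (norm q0)\<^sup>2" using q0(1) by simp
  qed
  moreover have "q0 \<noteq> 0" using q0(1) by auto
  ultimately have "?\<mu> \<in> mat_eigenvalues (A ** transpose A)" unfolding mat_eigenvalues_def by blast
  then show ?thesis using q0(2) by blast
qed

lemma eig_nonneg:
  assumes "\<mu> \<in> mat_eigenvalues ((A::real^'n^'m) ** transpose A)"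
  shows "\<mu> \<ge> 0"
proof -
  obtain v where v: "v \<noteq> 0" "(A ** transpose A) *v v = \<mu> *\<^sub>R v"
    using assms unfolding mat_eigenvalues_def by blast
  have "\<mu> * (v \<bullet> v) = (norm (transpose A *v v))\<^sup>2"
    using C_quad[of v A] v(2) by simp
  moreover have "v \<bullet> v > 0" using v(1) by simp
  ultimately show ?thesis by (metis zero_le_power2 zero_le_mult_iff not_le)
qed

lemma eig_finite: "finite (mat_eigenvalues ((A::real^'n^'m) ** transpose A))"
proof -
  let ?E = "mat_eigenvalues (A ** transpose A)"
  define f where "f \<mu> = (SOME v. v \<noteq> 0 \<and> (A ** transpose A) *v v = \<mu> *\<^sub>R v)" for \<mu>
  have f: "f \<mu> \<noteq> 0 \<and> (A ** transpose A) *v f \<mu> = \<mu> *\<^sub>R f \<mu>" if "\<mu> \<in> ?E" for \<mu>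
  proof -
    have "\<exists>v. v \<noteq> 0 \<and> (A ** transpose A) *v v = \<mu> *\<^sub>R v"
      using that unfolding mat_eigenvalues_def by blast
    then show ?thesis unfolding f_def by (rule someI_ex)
  qed
  have inj: "inj_on f ?E"
  proof (rule inj_onI)
    fix \<mu> \<nu> assume "\<mu> \<in> ?E" "\<nu> \<in> ?E" "f \<mu> = f \<nu>"
    then have "\<mu> *\<^sub>R f \<mu> = \<nu> *\<^sub>R f \<mu>" "f \<mu> \<noteq> 0" using f by metis+
    then show "\<mu> = \<nu>" by (metis scaleR_cancel_right)
  qed
  have orth: "pairwise orthogonal (f ` ?E)"
  proof (clarsimp simp: pairwise_def)
    fix \<mu> \<nu> assume m: "\<mu> \<in> ?E" and n: "\<nu> \<in> ?E" and ne: "f \<mu> \<noteq> f \<nu>"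
    then have "\<mu> \<noteq> \<nu>" by auto
    have "\<nu> * (f \<mu> \<bullet> f \<nu>) = f \<mu> \<bullet> ((A ** transpose A) *v f \<nu>)" using f[OF n] by simp
    also have "\<dots> = f \<nu> \<bullet> ((A ** transpose A) *v f \<mu>)" by (simp add: C_bil inner_commute)
    also have "\<dots> = \<mu> * (f \<mu> \<bullet> f \<nu>)" using f[OF m] by (simp add: inner_commute)
    finally have "(\<nu> - \<mu>) * (f \<mu> \<bullet> f \<nu>) = 0" by (simp add: algebra_simps)
    then show "orthogonal (f \<mu>) (f \<nu>)" using \<open>\<mu> \<noteq> \<nu>\<close> by (simp add: orthogonal_def)
  qed
  have "0 \<notin> f ` ?E" using f by auto
  then have "independent (f ` ?E)" using orth pairwise_orthogonal_independent by blast
  then have "finite (f ` ?E)" by (rule finiteI_independent)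
  then show ?thesis using inj finite_imageD by blast
qed

lemma sigma_facts:
  fixes A :: "real^'n^'m"
  shows "\<And>q. (norm (transpose A *v q))\<^sup>2 \<le> (sigma_max A)\<^sup>2 * (norm q)\<^sup>2"
    and "\<And>q. (sigma_min A)\<^sup>2 * (norm q)\<^sup>2 \<le> (norm (transpose A *v q))\<^sup>2"
    and "0 \<le> sigma_min A" and "sigma_min A \<le> sigma_max A"
proof -
  let ?E = "mat_eigenvalues (A ** transpose A)"
  obtain \<mu>1 where m1: "\<mu>1 \<in> ?E" "\<forall>q. 1 * (norm (transpose A *v q))\<^sup>2 \<le> 1 * (\<mu>1 * (norm q)\<^sup>2)"
    using eig_ext[of 1 A] by auto
  obtain \<mu>2 where m2: "\<mu>2 \<in> ?E" "\<forall>q. -1 * (norm (transpose A *v q))\<^sup>2 \<le> -1 * (\<mu>2 * (norm q)\<^sup>2)"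
    using eig_ext[of "-1" A] by auto
  have fin: "finite ?E" by (rule eig_finite)
  have ne: "?E \<noteq> {}" using m1 by auto
  have M1: "\<mu>1 \<le> Max ?E" using fin m1 by simp
  have M2: "Min ?E \<le> \<mu>2" using fin m2 by simp
  have Mn0: "Min ?E \<ge> 0" using eig_nonneg Min_in[OF fin ne] by blast
  have Mx0: "Max ?E \<ge> 0" using eig_nonneg Max_in[OF fin ne] by blast
  have sM: "(sigma_max A)\<^sup>2 = Max ?E" unfolding sigma_max_def using Mx0 by simp
  have sm: "(sigma_min A)\<^sup>2 = Min ?E" unfolding sigma_min_def using Mn0 by simp
  show "(norm (transpose A *v q))\<^sup>2 \<le> (sigma_max A)\<^sup>2 * (norm q)\<^sup>2" for q
  proof -
    have "(norm (transpose A *v q))\<^sup>2 \<le> \<mu>1 * (norm q)\<^sup>2" using m1(2)[rule_format, of q] by simp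
    moreover have "\<mu>1 * (norm q)\<^sup>2 \<le> Max ?E * (norm q)\<^sup>2" using M1 by (intro mult_right_mono) auto
    ultimately show ?thesis unfolding sM by linarith
  qed
  show "(sigma_min A)\<^sup>2 * (norm q)\<^sup>2 \<le> (norm (transpose A *v q))\<^sup>2" for q
  proof -
    have "\<mu>2 * (norm q)\<^sup>2 \<le> (norm (transpose A *v q))\<^sup>2" using m2(2)[rule_format, of q] by simp
    moreover have "Min ?E * (norm q)\<^sup>2 \<le> \<mu>2 * (norm q)\<^sup>2" using M2 by (intro mult_right_mono) auto
    ultimately show ?thesis unfolding sm by linarith
  qed
  show "0 \<le> sigma_min A" unfolding sigma_min_def using Mn0 by simp
  show "sigma_min A \<le> sigma_max A" unfolding sigma_min_def sigma_max_def
  proof -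
    have "Min ?E \<le> Max ?E" using Min_le[OF fin Max_in[OF fin ne]] .
    then show "sqrt (Min ?E) \<le> sqrt (Max ?E)" by simp
  qed
qed

definition Cm :: "real^'n^'m \<Rightarrow> real^'m \<Rightarrow> real^'m" where
  "Cm A q = A *v (transpose A *v q)"

lemma mv_scale: "(A::real^'n^'m) *v (c *\<^sub>R v) = c *\<^sub>R (A *v v)"
  by (simp add: matrix_vector_mult_def vec_eq_iff sum_distrib_left mult_ac)

lemma Cm_add: "Cm A (q + r) = Cm A q + Cm A r"
  by (simp add: Cm_def matrix_vector_right_distrib)
lemma Cm_scale: "Cm A (t *\<^sub>R q) = t *\<^sub>R Cm A q"
  by (simp add: Cm_def mv_scale)
lemma Cm_diff: "Cm A (q - r) = Cm A q - Cm A r"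
  by (simp add: Cm_def matrix_vector_mult_diff_distrib)
lemma Cm_bil: "r \<bullet> Cm A q = (transpose A *v r) \<bullet> (transpose A *v q)"
  unfolding Cm_def by (rule tdot[symmetric])
lemma Cm_bil': "Cm A q \<bullet> r = (transpose A *v r) \<bullet> (transpose A *v q)"
  by (subst inner_commute) (rule Cm_bil)
lemma Cm_quad: "q \<bullet> Cm A q = (norm (transpose A *v q))\<^sup>2"
  by (simp add: Cm_bil power2_norm_eq_inner)

lemma sigma_max_nonneg: "sigma_max (A::real^'n^'m) \<ge> 0"
  using sigma_facts(3,4)[of A] by linarith

lemma AT_bound: "norm (transpose A *v q) \<le> sigma_max (A::real^'n^'m) * norm q"
proof -
  have 1: "(norm (transpose A *v q))\<^sup>2 \<le> (sigma_max A)\<^sup>2 * (norm q)\<^sup>2" by (rule sigma_facts(1))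
  have 2: "(sigma_max A)\<^sup>2 * (norm q)\<^sup>2 = (sigma_max A * norm q)\<^sup>2" by (rule power_mult_distrib[symmetric])
  have 3: "0 \<le> sigma_max A * norm q" using sigma_max_nonneg[of A] by simp
  from 1 have "(norm (transpose A *v q))\<^sup>2 \<le> (sigma_max A * norm q)\<^sup>2" unfolding 2 .
  then show ?thesis using 3 by (rule power2_le_imp_le)
qed

lemma AT_lower: "sigma_min (A::real^'n^'m) * norm q \<le> norm (transpose A *v q)"
proof -
  have 1: "(sigma_min A)\<^sup>2 * (norm q)\<^sup>2 \<le> (norm (transpose A *v q))\<^sup>2" by (rule sigma_facts(2))
  have 2: "(sigma_min A)\<^sup>2 * (norm q)\<^sup>2 = (sigma_min A * norm q)\<^sup>2" by (rule power_mult_distrib[symmetric])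
  from 1 have "(sigma_min A * norm q)\<^sup>2 \<le> (norm (transpose A *v q))\<^sup>2" unfolding 2 .
  then show ?thesis by (rule power2_le_imp_le) (rule norm_ge_zero)
qed

lemma A_bound: "norm ((A::real^'n^'m) *v w) \<le> sigma_max A * norm w"
proof -
  have s0: "sigma_max A \<ge> 0" by (rule sigma_max_nonneg)
  have "(norm (A *v w))\<^sup>2 = (A *v w) \<bullet> (A *v w)" by (simp add: power2_norm_eq_inner)
  also have "\<dots> = (transpose A *v (A *v w)) \<bullet> w" by (rule tdot[symmetric])
  also have "\<dots> \<le> norm (transpose A *v (A *v w)) * norm w" by (rule norm_cauchy_schwarz)
  also have "\<dots> \<le> (sigma_max A * norm (A *v w)) * norm w"
    by (intro mult_right_mono AT_bound) simp
  finally have "norm (A *v w) * norm (A *v w) \<le> norm (A *v w) * (sigma_max A * norm w)"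
    by (simp add: power2_eq_square mult_ac)
  then show ?thesis
  proof (cases "norm (A *v w) = 0")
    case True then show ?thesis using s0 by simp
  next
    case False
    then have "norm (A *v w) > 0" by simp
    with \<open>norm (A *v w) * norm (A *v w) \<le> norm (A *v w) * (sigma_max A * norm w)\<close>
    show ?thesis by (rule mult_left_le_imp_le)
  qed
qed

lemma moments:
  fixes A :: "real^'n^'m" and q :: "real^'m"
  shows "((norm (transpose A *v q))\<^sup>2)\<^sup>2 \<le> (norm q)\<^sup>2 * (norm (Cm A q))\<^sup>2"
    and "(sigma_min A)\<^sup>2 * (norm q)\<^sup>2 \<le> (norm (transpose A *v q))\<^sup>2"
    and "(norm (transpose A *v q))\<^sup>2 \<le> (sigma_max A)\<^sup>2 * (norm q)\<^sup>2"
    and "(norm (Cm A q))\<^sup>2 \<le> (sigma_max A)\<^sup>2 * (norm (transpose A *v q))\<^sup>2"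
    and "(sigma_min A)\<^sup>2 * (norm (transpose A *v q))\<^sup>2 \<le> (norm (Cm A q))\<^sup>2"
proof -
  let ?a = "(norm q)\<^sup>2"
  let ?b = "(norm (transpose A *v q))\<^sup>2"
  let ?c = "(norm (Cm A q))\<^sup>2"
  have b0: "?b \<ge> 0"  by (rule zero_le_power2)
  have "q \<bullet> Cm A q \<le> norm q * norm (Cm A q)" by (rule norm_cauchy_schwarz)
  then have "?b \<le> norm q * norm (Cm A q)" unfolding Cm_quad .
  then have "?b\<^sup>2 \<le> (norm q * norm (Cm A q))\<^sup>2" using b0 by (rule power_mono)
  then show bac: "?b\<^sup>2 \<le> ?a * ?c" unfolding power_mult_distrib .
  show s2: "(sigma_min A)\<^sup>2 * ?a \<le> ?b"  by (rule sigma_facts(2))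
  show s1: "?b \<le> (sigma_max A)\<^sup>2 * ?a"  by (rule sigma_facts(1))
  have "norm (Cm A q) \<le> sigma_max A * norm (transpose A *v q)" unfolding Cm_def by (rule A_bound)
  then have "(norm (Cm A q))\<^sup>2 \<le> (sigma_max A * norm (transpose A *v q))\<^sup>2"
    by (rule power_mono) (rule norm_ge_zero)
  then show "?c \<le> (sigma_max A)\<^sup>2 * ?b" unfolding power_mult_distrib .
  show "(sigma_min A)\<^sup>2 * ?b \<le> ?c"
  proof (cases "?a = 0")
    case True
    then have "?b \<le> 0" using s1 by simp
    then have "?b = 0" using b0 by linarith
    then show ?thesis  by simp
  next
    case False
    then have a0: "?a > 0"  by simp
    have "(sigma_min A)\<^sup>2 * ?a * ?b \<le> ?b * ?b"
      using s2 b0 by (rule mult_right_mono)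
    also have "\<dots> \<le> ?a * ?c" using bac by (simp only: power2_eq_square)
    finally have "?a * ((sigma_min A)\<^sup>2 * ?b) \<le> ?a * ?c" by (simp only: mult_ac)
    then show ?thesis using a0 by (rule mult_left_le_imp_le)
  qed
qed

lemma arith_F_nonneg:
  fixes a b c e l sm2 :: real
  assumes "a \<ge> 0" "b \<ge> 0" "sm2 * b \<le> c" "sm2 * a \<le> b" "e > 0" "l \<le> e + sm2"
  shows "0 \<le> c + (2*e - l)*b + e*(e-l)*a"
proof -
  have h1: "(e - sm2)*b \<le> (2*e - l)*b" using assms by (intro mult_right_mono) auto
  have "e*(-sm2) \<le> e*(e-l)" using assms by (intro mult_left_mono) auto
  then have h2: "e*(-sm2)*a \<le> e*(e-l)*a" using assms by (intro mult_right_mono) auto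
  have h3: "e*(sm2*a) \<le> e*b" using assms by (intro mult_left_mono) auto
  have e1: "(e - sm2)*b = e*b - sm2*b" by (simp add: algebra_simps)
  have e2: "e*(-sm2)*a = - (e*(sm2*a))" by (simp add: algebra_simps)
  show ?thesis using h1 h2 h3 e1 e2 assms(3) by linarith
qed

lemma arith_F_upper:
  fixes a b c e l s2 :: real
  assumes "a \<ge> 0" "b \<ge> 0" "c \<le> s2 * b" "b \<le> s2 * a" "e > 0" "l > 0"
  shows "(s2 + e) * (c + (2*e - l)*b + e*(e-l)*a) \<le> (s2 + e - l) * (c + 2*e*b + e\<^sup>2*a)"
proof -
  have id: "(s2 + e - l) * (c + 2*e*b + e\<^sup>2*a) - (s2 + e) * (c + (2*e - l)*b + e*(e-l)*a)
      = l * ((s2*b - c) + e*(s2*a - b))"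
    by (simp add: algebra_simps power2_eq_square)
  have "0 \<le> e*(s2*a - b)" using assms by simp
  then have "0 \<le> l * ((s2*b - c) + e*(s2*a - b))" using assms by simp
  then show ?thesis using id by linarith
qed

lemma arith_noise:
  fixes a b c e s2 :: real
  assumes a0: "a \<ge> 0" and b0: "b \<ge> 0" and c0: "c \<ge> 0" and bs: "b \<le> s2 * a" and bac: "b\<^sup>2 \<le> a * c"
    and s0: "s2 \<ge> 0" and se: "s2 \<le> e"
  shows "b * (e + s2)\<^sup>2 \<le> s2 * (c + 2*e*b + e\<^sup>2*a)"
proof -
  have key: "s2*(s2*b - c) \<le> e\<^sup>2*(s2*a - b)"
  proof (cases "a = 0")
    case True
    then have "b = 0" using bs b0 by simp
    then show ?thesis using True c0 s0 by simp
  next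
    case False
    then have ap: "a > 0" using a0 by simp
    have "a*(s2*(s2*b - c)) = s2*(s2*a*b - a*c)" by (simp add: algebra_simps)
    also have "\<dots> \<le> s2*(s2*a*b - b\<^sup>2)" using bac s0 by (intro mult_left_mono) auto
    also have "\<dots> = (s2*b)*(s2*a - b)" by (simp add: algebra_simps power2_eq_square)
    also have "\<dots> \<le> (s2*(s2*a))*(s2*a - b)"
      using bs s0 by (intro mult_right_mono mult_left_mono) auto
    also have "\<dots> = (s2 * s2)*(a*(s2*a - b))" by (simp add: algebra_simps)
    also have "\<dots> \<le> e\<^sup>2*(a*(s2*a - b))"
    proof (rule mult_right_mono)
      show "s2 * s2 \<le> e\<^sup>2" using s0 se by (simp add: power2_eq_square mult_mono)
      show "0 \<le> a*(s2*a - b)" using a0 bs by simp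
    qed
    also have "\<dots> = a*(e\<^sup>2*(s2*a - b))" by (simp add: algebra_simps)
    finally show ?thesis using ap by (rule mult_left_le_imp_le)
  qed
  have id: "b * (e + s2)\<^sup>2 - s2 * (c + 2*e*b + e\<^sup>2*a) = s2*(s2*b - c) - e\<^sup>2*(s2*a - b)"
    by (simp add: algebra_simps power2_eq_square)
  show ?thesis using key id by linarith
qed

lemma discr:
  fixes a b c :: real
  assumes "\<And>t. 0 \<le> a + 2*b*t + c*t\<^sup>2" "c \<ge> 0"
  shows "b\<^sup>2 \<le> a * c"
proof (cases "c = 0")
  case True
  have "b = 0"
  proof (rule ccontr)
    assume "b \<noteq> 0"
    have "0 \<le> a + 2*b*(-(a+1)/(2*b)) + c*(-(a+1)/(2*b))\<^sup>2" by (rule assms(1))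
    also have "\<dots> = -1" using \<open>b \<noteq> 0\<close> True by (simp add: field_simps)
    finally show False by simp
  qed
  then show ?thesis using True by simp
next
  case False
  then have c0: "c > 0" using assms(2) by simp
  have "0 \<le> a + 2*b*(-b/c) + c*(-b/c)\<^sup>2" by (rule assms(1))
  also have "\<dots> = a - b\<^sup>2/c" using c0 by (simp add: field_simps power2_eq_square)
  finally have "b\<^sup>2 / c \<le> a" by simp
  then show ?thesis using c0 by (simp add: field_simps mult.commute)
qed

lemma Cm_q: "Cm A q \<bullet> q = (norm (transpose A *v q))\<^sup>2"
  by (simp add: Cm_bil' power2_norm_eq_inner)

lemma phi_sq: "(norm (Cm A q + t *\<^sub>R q))\<^sup>2
   = (norm (Cm A q))\<^sup>2 + 2 * t * (norm (transpose A *v q))\<^sup>2 + t\<^sup>2 * (norm q)\<^sup>2"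
proof -
  have "(norm (Cm A q + t *\<^sub>R q))\<^sup>2 = (norm (Cm A q))\<^sup>2 + 2 * (Cm A q \<bullet> (t *\<^sub>R q)) + (norm (t *\<^sub>R q))\<^sup>2"
    by (rule nsq_add)
  also have "Cm A q \<bullet> (t *\<^sub>R q) = t * (norm (transpose A *v q))\<^sup>2"
    by (simp add: Cm_q)
  also have "(norm (t *\<^sub>R q))\<^sup>2 = t\<^sup>2 * (norm q)\<^sup>2" by (simp add: power_mult_distrib)
  finally show ?thesis by simp
qed

lemma inner4: "(x + e *\<^sub>R y) \<bullet> (z + f *\<^sub>R w) = x \<bullet> z + f * (x \<bullet> w) + e * (y \<bullet> z) + e * f * (y \<bullet> (w::'a::real_inner))"
  by (simp add: inner_add_left inner_add_right algebra_simps)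

lemma F_expand: "(Cm A q + e *\<^sub>R q) \<bullet> (Cm A q + f *\<^sub>R q)
   = (norm (Cm A q))\<^sup>2 + (e + f) * (norm (transpose A *v q))\<^sup>2 + e * f * (norm q)\<^sup>2"
proof -
  have 1: "Cm A q \<bullet> Cm A q = (norm (Cm A q))\<^sup>2" by (rule power2_norm_eq_inner[symmetric])
  have 2: "q \<bullet> q = (norm q)\<^sup>2" by (rule power2_norm_eq_inner[symmetric])
  show ?thesis unfolding inner4 1 2 Cm_q Cm_quad by (simp add: distrib_right)
qed

lemma F_sym: "(Cm A q + e *\<^sub>R q) \<bullet> (Cm A r + f *\<^sub>R r) = (Cm A r + e *\<^sub>R r) \<bullet> (Cm A q + f *\<^sub>R q)"
proof -
  have s1: "Cm A q \<bullet> r = q \<bullet> Cm A r" unfolding Cm_bil Cm_bil' by (rule inner_commute)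
  have s2: "Cm A r \<bullet> q = r \<bullet> Cm A q" unfolding Cm_bil Cm_bil' by (rule inner_commute)
  have s3: "Cm A q \<bullet> Cm A r = Cm A r \<bullet> Cm A q" by (rule inner_commute)
  have s4: "q \<bullet> r = r \<bullet> q" by (rule inner_commute)
  have s5: "q \<bullet> Cm A r = Cm A r \<bullet> q" by (rule inner_commute)
  have s6: "Cm A q \<bullet> r = r \<bullet> Cm A q" by (rule inner_commute)
  show ?thesis unfolding inner4 using s1 s2 s3 s4 s5 s6 by simp
qed

lemma phi_surj:
  fixes A :: "real^'n^'m"
  assumes e: "e > 0"
  shows "\<exists>q. Cm A q + e *\<^sub>R q = r"
proof -
  let ?f = "\<lambda>q::real^'m. Cm A q + e *\<^sub>R q"
  have lin: "linear ?f"
    by (rule linearI) (simp_all add: Cm_add Cm_scale algebra_simps)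
  have "inj ?f"
    unfolding linear_injective_0[OF lin]
  proof (intro allI impI)
    fix q assume h: "?f q = 0"
    have "0 = q \<bullet> ?f q" using h by simp
    also have "\<dots> = (norm (transpose A *v q))\<^sup>2 + e * (norm q)\<^sup>2"
      by (simp add: inner_add_right Cm_quad power2_norm_eq_inner)
    finally have "e * (norm q)\<^sup>2 \<le> 0" using zero_le_power2[of "norm (transpose A *v q)"] by linarith
    then have "(norm q)\<^sup>2 \<le> 0" using e by (simp add: mult_le_0_iff)
    then show "q = 0" by simp
  qed
  then have "surj ?f" using lin by (intro linear_injective_imp_surjective) auto
  then obtain q where "r = ?f q" by (blast dest: surjD)
  then show ?thesis by blast
qed

lemma K_bound:
  fixes A :: "real^'n^'m"
  assumes e: "e > 0" and l: "l > 0" and lm: "l \<le> e + (sigma_min A)\<^sup>2"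
  shows "norm (Cm A q + (e - l) *\<^sub>R q) \<le> ((sigma_max A)\<^sup>2 + e - l) / ((sigma_max A)\<^sup>2 + e) * norm (Cm A q + e *\<^sub>R q)"
proof -
  let ?s2 = "(sigma_max A)\<^sup>2" and ?sm2 = "(sigma_min A)\<^sup>2"
  let ?h = "(?s2 + e - l) / (?s2 + e)"
  let ?P = "\<lambda>x. Cm A x + e *\<^sub>R x" and ?Q = "\<lambda>x. Cm A x + (e - l) *\<^sub>R x"
  define F where "F x y = ?P x \<bullet> ?Q y" for x y
  have smle: "?sm2 \<le> ?s2" using sigma_facts(3,4)[of A] by (intro power_mono) auto
  have s2pos: "?s2 + e > 0" using e by (simp add: add_nonneg_pos)
  have h0: "?h \<ge> 0" using lm smle s2pos by (intro divide_nonneg_pos) auto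
  have Fxx: "F x x = (norm (Cm A x))\<^sup>2 + (2*e - l) * (norm (transpose A *v x))\<^sup>2 + e * (e - l) * (norm x)\<^sup>2" for x
    unfolding F_def F_expand by simp
  have psd: "0 \<le> F x x" for x
    unfolding Fxx by (rule arith_F_nonneg[OF _ _ moments(5) moments(2) e lm]) simp_all
  have upper: "F x x \<le> ?h * (norm (?P x))\<^sup>2" for x
  proof -
    have "(?s2 + e) * F x x \<le> (?s2 + e - l) * (norm (?P x))\<^sup>2"
      unfolding Fxx phi_sq using moments[of A x] e l
      by (intro arith_F_upper) auto
    then show ?thesis using s2pos by (simp add: field_simps)
  qed
  obtain r where r: "?P r = ?Q q" using phi_surj[OF e, of A "?Q q"] by blast
  have linP: "?P (q + t *\<^sub>R r) = ?P q + t *\<^sub>R ?P r" for t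
    by (simp add: Cm_add Cm_scale algebra_simps)
  have linQ: "?Q (q + t *\<^sub>R r) = ?Q q + t *\<^sub>R ?Q r" for t
    by (simp add: Cm_add Cm_scale algebra_simps)
  have symm: "F r q = F q r" unfolding F_def by (rule F_sym)
  have expand: "F (q + t *\<^sub>R r) (q + t *\<^sub>R r) = F q q + 2 * F q r * t + F r r * t\<^sup>2" for t
  proof -
    have "F (q + t *\<^sub>R r) (q + t *\<^sub>R r) = F q q + t * F q r + t * F r q + t * t * F r r"
      unfolding F_def linP linQ inner4 by simp
    then show ?thesis using symm by (simp add: power2_eq_square algebra_simps)
  qed
  have cs: "(F q r)\<^sup>2 \<le> F q q * F r r"
  proof (rule discr)
    show "0 \<le> F q q + 2 * F q r * t + F r r * t\<^sup>2" for t using psd[of "q + t *\<^sub>R r"] expand[of t] by simp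
    show "0 \<le> F r r" by (rule psd)
  qed
  have Fqr: "F q r = (norm (?Q q))\<^sup>2"
  proof -
    have "F q r = ?P r \<bullet> ?Q q" unfolding F_def by (rule F_sym)
    also have "\<dots> = (norm (?Q q))\<^sup>2" unfolding r by (simp add: power2_norm_eq_inner)
    finally show ?thesis .
  qed
  have Frr: "F r r \<le> ?h * (norm (?Q q))\<^sup>2" using upper[of r] unfolding r .
  let ?a = "(norm (?Q q))\<^sup>2" and ?b = "(norm (?P q))\<^sup>2"
  have "?a * ?a \<le> F q q * F r r" using cs unfolding Fqr by (simp add: power2_eq_square)
  also have "\<dots> \<le> (?h * ?b) * (?h * ?a)"
    using upper[of q] Frr psd[of q] psd[of r] by (intro mult_mono) auto
  finally have "?a * ?a \<le> ?a * (?h\<^sup>2 * ?b)" by (simp add: power2_eq_square mult_ac)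
  then have "?a \<le> ?h\<^sup>2 * ?b"
  proof (cases "?a = 0")
    case True then show ?thesis by simp
  next
    case False then have "?a > 0" by simp
    with \<open>?a * ?a \<le> ?a * (?h\<^sup>2 * ?b)\<close> show ?thesis by (rule mult_left_le_imp_le)
  qed
  moreover have "(?h * norm (?P q))\<^sup>2 = ?h\<^sup>2 * ?b" by (rule power_mult_distrib)
  ultimately have "(norm (?Q q))\<^sup>2 \<le> (?h * norm (?P q))\<^sup>2" by simp
  moreover have "0 \<le> ?h * norm (?P q)" using h0 norm_ge_zero by (rule mult_nonneg_nonneg)
  ultimately show ?thesis by (rule power2_le_imp_le)
qed

lemma noise_bound:
  fixes A :: "real^'n^'m"
  assumes e: "e > 0" and se: "(sigma_max A)\<^sup>2 \<le> e"
  shows "norm (transpose A *v q) * (e + (sigma_max A)\<^sup>2) \<le> sigma_max A * norm (Cm A q + e *\<^sub>R q)"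
proof -
  let ?s2 = "(sigma_max A)\<^sup>2"
  have 1: "(norm (transpose A *v q))\<^sup>2 * (e + ?s2)\<^sup>2 \<le> ?s2 * (norm (Cm A q + e *\<^sub>R q))\<^sup>2"
    unfolding phi_sq
    by (rule arith_noise[OF zero_le_power2 zero_le_power2 zero_le_power2 moments(3) moments(1) zero_le_power2 se])
  have 2: "(norm (transpose A *v q) * (e + ?s2))\<^sup>2 = (norm (transpose A *v q))\<^sup>2 * (e + ?s2)\<^sup>2"
    by (rule power_mult_distrib)
  have 3: "(sigma_max A * norm (Cm A q + e *\<^sub>R q))\<^sup>2 = ?s2 * (norm (Cm A q + e *\<^sub>R q))\<^sup>2"
    by (rule power_mult_distrib)
  have "(norm (transpose A *v q) * (e + ?s2))\<^sup>2 \<le> (sigma_max A * norm (Cm A q + e *\<^sub>R q))\<^sup>2"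
    unfolding 2 3 by (rule 1)
  moreover have "0 \<le> sigma_max A * norm (Cm A q + e *\<^sub>R q)"
    using sigma_max_nonneg[of A] norm_ge_zero by (rule mult_nonneg_nonneg)
  ultimately show ?thesis by (rule power2_le_imp_le)
qed

section \<open>The gradient-type step\<close>

lemma G_apply: "(transpose A ** A + e *\<^sub>R mat 1) *v v = transpose A *v ((A::real^'n^'m) *v v) + e *\<^sub>R v"
proof -
  have "(e *\<^sub>R mat 1) *v v = e *\<^sub>R (mat 1 *v v)" by (rule scaleR_matrix_vector_assoc[symmetric])
  then have "(e *\<^sub>R mat 1) *v v = e *\<^sub>R v" by simp
  then show ?thesis by (simp add: matrix_vector_mult_add_rdistrib matrix_vector_mul_assoc)
qed

lemma G_inv:
  fixes A :: "real^'n^'m"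
  assumes e: "e > 0"
  shows "matrix_inv (transpose A ** A + e *\<^sub>R mat 1) ** (transpose A ** A + e *\<^sub>R mat 1) = mat 1"
proof -
  let ?G = "transpose A ** A + e *\<^sub>R mat 1"
  have lin: "linear ((*v) ?G)" by (rule matrix_vector_mul_linear)
  have "inj ((*v) ?G)"
    unfolding linear_injective_0[OF lin]
  proof (intro allI impI)
    fix v assume h: "?G *v v = 0"
    have "0 = v \<bullet> (?G *v v)" using h by simp
    also have "\<dots> = (norm (A *v v))\<^sup>2 + e * (norm v)\<^sup>2"
    proof -
      have "v \<bullet> (transpose A *v (A *v v)) = (A *v v) \<bullet> (A *v v)"
        using tdot[of A "A *v v" v] by (simp add: inner_commute)
      then show ?thesis unfolding G_apply by (simp add: inner_add_right power2_norm_eq_inner)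
    qed
    finally have "e * (norm v)\<^sup>2 \<le> 0" using zero_le_power2[of "norm (A *v v)"] by linarith
    then have "(norm v)\<^sup>2 \<le> 0" using e by (simp add: mult_le_0_iff)
    then show "v = 0" by simp
  qed
  then have "\<exists>B. B ** ?G = mat 1" by (simp add: matrix_left_invertible_injective)
  then have "invertible ?G" by (simp add: invertible_left_inverse)
  then have "\<exists>A'. ?G ** A' = mat 1 \<and> A' ** ?G = mat 1" by (simp add: invertible_def)
  then have "?G ** matrix_inv ?G = mat 1 \<and> matrix_inv ?G ** ?G = mat 1"
    unfolding matrix_inv_def by (rule someI_ex)
  then show ?thesis by blast
qed

lemma MAt:
  fixes A :: "real^'n^'m"
  assumes e: "e > 0" and q: "Cm A q + e *\<^sub>R q = r"
  shows "matrix_inv (transpose A ** A + e *\<^sub>R mat 1) *v (transpose A *v r) = transpose A *v q"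
proof -
  let ?G = "transpose A ** A + e *\<^sub>R mat 1"
  have "transpose A *v r = ?G *v (transpose A *v q)"
    unfolding G_apply q[symmetric] Cm_def by (simp add: matrix_vector_right_distrib mv_scale)
  then have "matrix_inv ?G *v (transpose A *v r) = matrix_inv ?G *v (?G *v (transpose A *v q))"
    by (simp only:)
  also have "\<dots> = (matrix_inv ?G ** ?G) *v (transpose A *v q)" by (rule matrix_vector_mul_assoc)
  also have "\<dots> = transpose A *v q" using G_inv[OF e, of A] by simp
  finally show ?thesis .
qed

lemma u_err:
  fixes A :: "real^'n^'m" and xs xp :: "real^'n" and nu :: "real^'m"
  assumes e: "e > 0" and l: "l > 0" and lm: "l \<le> e + (sigma_min A)\<^sup>2" and se: "(sigma_max A)\<^sup>2 \<le> e"
    and u: "u = xp + l *\<^sub>R (matrix_inv (transpose A ** A + e *\<^sub>R mat 1) *v (transpose A *v (nu - A *v (xp - xs))))"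
    and card: "card (\<Omega> \<union> supp (xp - xs)) \<le> q"
  shows "norm (restr \<Omega> (u - xs)) \<le> (rip_const A q + ((sigma_max A)\<^sup>2 - l * (sigma_max A)\<^sup>2 / (e + (sigma_max A)\<^sup>2))) * norm (xp - xs)
      + l * sigma_max A / (e + (sigma_max A)\<^sup>2) * norm nu"
proof -
  let ?s1 = "sigma_max A" and ?s2 = "(sigma_max A)\<^sup>2"
  let ?h = "(?s2 + e - l) / (?s2 + e)"
  define z where "z = xp - xs"
  obtain q1 where q1: "Cm A q1 + e *\<^sub>R q1 = A *v z" using phi_surj[OF e, of A] by blast
  obtain q2 where q2: "Cm A q2 + e *\<^sub>R q2 = nu" using phi_surj[OF e, of A] by blast
  have q12: "Cm A (q2 - q1) + e *\<^sub>R (q2 - q1) = nu - A *v z"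
    using q1 q2 by (simp add: Cm_diff algebra_simps)
  have "u = xp + l *\<^sub>R (transpose A *v (q2 - q1))"
    unfolding u z_def[symmetric] MAt[OF e q12] ..
  then have uxs: "u - xs = (z - transpose A *v (A *v z)) + transpose A *v (Cm A q1 + (e - l) *\<^sub>R q1)
       + l *\<^sub>R (transpose A *v q2)"
  proof -
    assume uu: "u = xp + l *\<^sub>R (transpose A *v (q2 - q1))"
    have "Cm A q1 + (e - l) *\<^sub>R q1 = A *v z - l *\<^sub>R q1" using q1 by (simp add: algebra_simps)
    then have e1: "transpose A *v (Cm A q1 + (e - l) *\<^sub>R q1) = transpose A *v (A *v z) - l *\<^sub>R (transpose A *v q1)"
      by (simp add: matrix_vector_mult_diff_distrib mv_scale)
    have e2: "transpose A *v (q2 - q1) = transpose A *v q2 - transpose A *v q1"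
      by (rule matrix_vector_mult_diff_distrib)
    have e3: "xp - xs = z" by (simp add: z_def)
    show ?thesis unfolding uu e1 e2 scaleR_diff_right
      using e3 by (simp add: algebra_simps)
  qed
  have sp: "0 \<le> ?s1" by (rule sigma_max_nonneg)
  have den: "e + ?s2 > 0" using e by (simp add: add_pos_nonneg)
  have t1: "norm (restr \<Omega> (z - transpose A *v (A *v z))) \<le> rip_const A q * norm z"
    using card unfolding z_def by (rule rip_restr_bound)
  have "norm (transpose A *v (Cm A q1 + (e - l) *\<^sub>R q1)) \<le> ?s1 * norm (Cm A q1 + (e - l) *\<^sub>R q1)"
    by (rule AT_bound)
  also have "\<dots> \<le> ?s1 * (?h * norm (A *v z))"
    using K_bound[OF e l lm, of q1] sp unfolding q1 by (intro mult_left_mono) auto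
  also have "\<dots> \<le> ?s1 * (?h * (?s1 * norm z))"
  proof -
    have h0: "?h \<ge> 0"
    proof -
      have "(sigma_min A)\<^sup>2 \<le> ?s2" using sigma_facts(3,4)[of A] by (intro power_mono) auto
      then show ?thesis using lm den by (intro divide_nonneg_pos) (auto simp: add.commute)
    qed
    show ?thesis using A_bound[of A z] h0 sp by (intro mult_left_mono) auto
  qed
  also have "\<dots> = (?s2 - l * ?s2 / (e + ?s2)) * norm z"
    using den by (simp add: field_simps power2_eq_square)
  finally have t2: "norm (transpose A *v (Cm A q1 + (e - l) *\<^sub>R q1)) \<le> (?s2 - l * ?s2 / (e + ?s2)) * norm z" .
  have "norm (transpose A *v q2) * (e + ?s2) \<le> ?s1 * norm nu"
    using noise_bound[OF e se, of q2] unfolding q2 .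
  then have "norm (transpose A *v q2) \<le> ?s1 / (e + ?s2) * norm nu"
    using den by (simp add: field_simps)
  then have "l * norm (transpose A *v q2) \<le> l * (?s1 / (e + ?s2) * norm nu)"
    using l by (intro mult_left_mono) auto
  then have t3: "norm (l *\<^sub>R (transpose A *v q2)) \<le> l * ?s1 / (e + ?s2) * norm nu"
    using l by simp
  have "norm (restr \<Omega> (u - xs)) \<le> norm (restr \<Omega> (z - transpose A *v (A *v z)))
      + norm (restr \<Omega> (transpose A *v (Cm A q1 + (e - l) *\<^sub>R q1))) + norm (restr \<Omega> (l *\<^sub>R (transpose A *v q2)))"
    unfolding uxs restr_add by (rule order_trans[OF norm_triangle_ineq add_right_mono[OF norm_triangle_ineq]])
  also have "\<dots> \<le> rip_const A q * norm z + (?s2 - l * ?s2 / (e + ?s2)) * norm z + l * ?s1 / (e + ?s2) * norm nu"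
    using t1 t2 t3 norm_restr_le[of \<Omega>] by (meson add_mono order_trans)
  finally show ?thesis unfolding z_def by (simp add: algebra_simps)
qed

section \<open>Rounding the relaxed weights\<close>

definition fr :: "real^'n \<Rightarrow> 'n set" where "fr w = {i. 0 < w$i \<and> w$i < 1}"

lemma sum_indicator_card: "(\<Sum>i\<in>UNIV. (if i \<in> T then 1 else 0::real)) = real (card (T::'n::finite set))"
  by (simp add: sum.If_cases)

lemma round_base:
  fixes w :: "real^'n"
  assumes feas: "ntrot_feasible k w" and f0: "fr w = {}"
  shows "\<exists>T. card T = k \<and> hadamard g w = restr T g"
proof -
  let ?T = "{i. w$i = 1}"
  have w01: "w$i = (if i \<in> ?T then 1 else 0)" for i
  proof -
    have "0 \<le> w$i" "w$i \<le> 1" using feas by (auto simp: ntrot_feasible_def)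
    moreover have "\<not> (0 < w$i \<and> w$i < 1)" using f0 by (auto simp: fr_def)
    ultimately show ?thesis by auto
  qed
  have "real k = (\<Sum>i\<in>UNIV. w$i)" using feas by (simp add: ntrot_feasible_def)
  also have "\<dots> = (\<Sum>i\<in>UNIV. (if i \<in> ?T then 1 else 0))" by (rule sum.cong) (use w01 in auto)
  also have "\<dots> = real (card ?T)" by (rule sum_indicator_card)
  finally have "card ?T = k" by simp
  moreover have "hadamard g w = restr ?T g"
    by (simp add: vec_eq_iff) (metis mult.right_neutral mult_zero_right w01)
  ultimately show ?thesis by blast
qed

lemma two_frac:
  fixes w :: "real^'n"
  assumes feas: "ntrot_feasible k w" and i: "i \<in> fr w"
  shows "\<exists>j. j \<in> fr w \<and> j \<noteq> i"
proof (rule ccontr)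
  assume "\<not> ?thesis"
  then have oth: "\<forall>j. j \<noteq> i \<longrightarrow> j \<notin> fr w" by blast
  let ?T = "{j. j \<noteq> i \<and> w$j = 1}"
  have wj: "w$j = (if j \<in> ?T then 1 else 0)" if "j \<noteq> i" for j
  proof -
    have "0 \<le> w$j" "w$j \<le> 1" using feas by (auto simp: ntrot_feasible_def)
    moreover have "\<not> (0 < w$j \<and> w$j < 1)" using oth that by (auto simp: fr_def)
    ultimately show ?thesis using that by auto
  qed
  have "real k = (\<Sum>j\<in>UNIV. w$j)" using feas by (simp add: ntrot_feasible_def)
  also have "\<dots> = w$i + (\<Sum>j\<in>UNIV - {i}. w$j)" by (simp add: sum.remove)
  also have "(\<Sum>j\<in>UNIV - {i}. w$j) = (\<Sum>j\<in>UNIV - {i}. (if j \<in> ?T then 1 else 0))"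
    by (rule sum.cong) (use wj in auto)
  also have "\<dots> = (\<Sum>j\<in>UNIV. (if j \<in> ?T then 1 else 0))"
    by (rule sum.mono_neutral_left) auto
  also have "\<dots> = real (card ?T)" by (rule sum_indicator_card)
  finally have eq: "w$i = real k - real (card ?T)" by simp
  have "0 < w$i" "w$i < 1" using i by (auto simp: fr_def)
  then show False unfolding eq
    by (cases "card ?T < k") auto
qed

lemma round:
  fixes A :: "real^'n^'m" and g w :: "real^'n"
  assumes "ntrot_feasible k w"
  shows "\<exists>T. card T = k \<and> norm (A *v hadamard g w) \<le> norm (A *v restr T g)"
  using assms
proof (induction "card (fr w)" arbitrary: w rule: less_induct)
  case less
  note feas = less.prems
  show ?case
  proof (cases "fr w = {}")
    case True
    then obtain T where "card T = k" "hadamard g w = restr T g" using round_base[OF feas] by blast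
    then show ?thesis by auto
  next
    case False
    then obtain i where i: "i \<in> fr w" by blast
    obtain j where j: "j \<in> fr w" "j \<noteq> i" using two_frac[OF feas i] by blast
    have wi: "0 < w$i" "w$i < 1" and wj: "0 < w$j" "w$j < 1" using i j by (auto simp: fr_def)
    define d :: "real^'n" where "d = (\<chi> l. (if l = i then 1 else 0) - (if l = j then 1 else 0))"
    have dsum: "(\<Sum>l\<in>UNIV. d$l) = 0"
      by (simp add: d_def sum_subtractf)
    have di: "d$i = 1" and dj: "d$j = -1" and dl: "\<And>l. l \<noteq> i \<Longrightarrow> l \<noteq> j \<Longrightarrow> d$l = 0"
      using j(2) by (auto simp: d_def)
    define t1 where "t1 = min (1 - w$i) (w$j)"
    define t2 where "t2 = min (w$i) (1 - w$j)"
    have t1p: "t1 > 0" and t2p: "t2 > 0" using wi wj by (auto simp: t1_def t2_def)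
    define w1 where "w1 = w + t1 *\<^sub>R d"
    define w2 where "w2 = w - t2 *\<^sub>R d"
    have wb: "0 \<le> w$l" "w$l \<le> 1" for l using feas by (auto simp: ntrot_feasible_def)
    have f1: "ntrot_feasible k w1"
      unfolding ntrot_feasible_def
    proof (intro conjI allI)
      have "(\<Sum>l\<in>UNIV. w1$l) = (\<Sum>l\<in>UNIV. w$l) + t1 * (\<Sum>l\<in>UNIV. d$l)"
        by (simp add: w1_def sum.distrib sum_distrib_left)
      then show "(\<Sum>l\<in>UNIV. w1$l) = real k" using feas dsum by (simp add: ntrot_feasible_def)
      fix l
      show "0 \<le> w1$l" "w1$l \<le> 1"
        using wb[of l] di dj dl[of l] t1p by (cases "l = i"; cases "l = j"; auto simp: w1_def t1_def)+
    qed
    have f2: "ntrot_feasible k w2"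
      unfolding ntrot_feasible_def
    proof (intro conjI allI)
      have "(\<Sum>l\<in>UNIV. w2$l) = (\<Sum>l\<in>UNIV. w$l) - t2 * (\<Sum>l\<in>UNIV. d$l)"
        by (simp add: w2_def sum_subtractf sum_distrib_left)
      then show "(\<Sum>l\<in>UNIV. w2$l) = real k" using feas dsum by (simp add: ntrot_feasible_def)
      fix l
      show "0 \<le> w2$l" "w2$l \<le> 1"
        using wb[of l] di dj dl[of l] t2p by (cases "l = i"; cases "l = j"; auto simp: w2_def t2_def)+
    qed
    have sub1: "fr w1 \<subset> fr w"
    proof
      show "fr w1 \<subseteq> fr w"
      proof
        fix l assume l: "l \<in> fr w1"
        show "l \<in> fr w"
          using l i j dl[of l] by (cases "l = i \<or> l = j") (auto simp: fr_def w1_def)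
      qed
      have "i \<notin> fr w1 \<or> j \<notin> fr w1"
        using di dj by (auto simp: fr_def w1_def t1_def min_def)
      then show "fr w1 \<noteq> fr w" using i j by blast
    qed
    have sub2: "fr w2 \<subset> fr w"
    proof
      show "fr w2 \<subseteq> fr w"
      proof
        fix l assume l: "l \<in> fr w2"
        show "l \<in> fr w"
          using l i j dl[of l] by (cases "l = i \<or> l = j") (auto simp: fr_def w2_def)
      qed
      have "i \<notin> fr w2 \<or> j \<notin> fr w2"
        using di dj by (auto simp: fr_def w2_def t2_def min_def)
      then show "fr w2 \<noteq> fr w" using i j by blast
    qed
    obtain T1 where T1: "card T1 = k" "norm (A *v hadamard g w1) \<le> norm (A *v restr T1 g)"
      using less.hyps[OF psubset_card_mono[OF finite sub1] f1] by blast
    obtain T2 where T2: "card T2 = k" "norm (A *v hadamard g w2) \<le> norm (A *v restr T2 g)"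
      using less.hyps[OF psubset_card_mono[OF finite sub2] f2] by blast
    define \<alpha> where "\<alpha> = t2 / (t1 + t2)"
    have a0: "0 \<le> \<alpha>" "\<alpha> \<le> 1" using t1p t2p by (auto simp: \<alpha>_def)
    have comb: "hadamard g w = \<alpha> *\<^sub>R hadamard g w1 + (1 - \<alpha>) *\<^sub>R hadamard g w2"
    proof -
      have "\<alpha> * t1 = (1 - \<alpha>) * t2" using t1p t2p by (simp add: \<alpha>_def field_simps)
      then show ?thesis
        by (simp add: vec_eq_iff w1_def w2_def algebra_simps)
           (metis distrib_left mult.assoc mult.commute)
    qed
    have "norm (A *v hadamard g w) = norm (\<alpha> *\<^sub>R (A *v hadamard g w1) + (1 - \<alpha>) *\<^sub>R (A *v hadamard g w2))"
      unfolding comb by (simp add: matrix_vector_right_distrib mv_scale)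
    also have "\<dots> \<le> \<alpha> * norm (A *v hadamard g w1) + (1 - \<alpha>) * norm (A *v hadamard g w2)"
      using a0 by (metis (no_types) abs_of_nonneg diff_ge_0_iff_ge norm_scaleR norm_triangle_ineq)
    also have "\<dots> \<le> \<alpha> * max (norm (A *v restr T1 g)) (norm (A *v restr T2 g))
        + (1 - \<alpha>) * max (norm (A *v restr T1 g)) (norm (A *v restr T2 g))"
      using a0 T1 T2 by (intro add_mono mult_left_mono) auto
    also have "\<dots> = max (norm (A *v restr T1 g)) (norm (A *v restr T2 g))" by (simp add: algebra_simps)
    finally show ?thesis using T1 T2 by (auto simp: max_def split: if_splits)
  qed
qed

section \<open>The relaxed optimal thresholding step\<close>

lemma sum_compare:
  fixes f g :: "'a \<Rightarrow> real"
  assumes "finite P" "finite Q" "card P = card Q" "\<And>i j. i \<in> P \<Longrightarrow> j \<in> Q \<Longrightarrow> f i \<le> g j"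
  shows "sum f P \<le> sum g Q"
proof (cases "Q = {}")
  case True
  then have "P = {}" using assms by simp
  then show ?thesis using True by simp
next
  case False
  let ?m = "Min (g ` Q)"
  have m: "?m \<in> g ` Q" using False assms(2) by simp
  then obtain j0 where j0: "j0 \<in> Q" "?m = g j0" by auto
  have "sum f P \<le> of_nat (card P) * ?m"
    by (rule sum_bounded_above) (use assms(4) j0 in auto)
  also have "\<dots> = of_nat (card Q) * ?m" using assms(3) by simp
  also have "\<dots> \<le> sum g Q"
    by (rule sum_bounded_below) (use assms(2) in auto)
  finally show ?thesis .
qed

lemma norm_sq_restr_sum: "(norm (restr X z))\<^sup>2 = sum (\<lambda>i. (z$i)\<^sup>2) X" by (rule norm_restr_sq)

lemma rot_D_bound:
  fixes u w xS :: "real^'n"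
  assumes sS: "supp xS \<subseteq> S" and cS: "card S = k" and cL: "card L = k"
    and Lk: "\<And>i j. i \<in> L \<Longrightarrow> j \<notin> L \<Longrightarrow> \<bar>hadamard u w $ j\<bar> \<le> \<bar>hadamard u w $ i\<bar>"
    and w01: "\<And>i. 0 \<le> w$i \<and> w$i \<le> 1"
  shows "norm (restr L (hadamard u w) - hadamard xS w) \<le> 2 * norm (restr (L \<union> S) (u - xS))"
proof -
  let ?v = "hadamard u w" and ?e = "u - xS"
  let ?D = "restr L ?v - hadamard xS w"
  let ?E = "\<lambda>i. (?e$i * w$i)\<^sup>2"
  have xs0: "xS$i = 0" if "i \<notin> S" for i using sS that by (auto simp: supp_def)
  have Di: "(?D$i)\<^sup>2 = (if i \<in> L then ?E i else 0) + (if i \<in> S - L then (xS$i * w$i)\<^sup>2 else 0)" for i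
    using xs0[of i] by (auto simp: algebra_simps)
  have "(norm ?D)\<^sup>2 = (\<Sum>i\<in>UNIV. (if i \<in> L then ?E i else 0) + (if i \<in> S - L then (xS$i * w$i)\<^sup>2 else 0))"
    unfolding norm_sq_sum using Di by simp
  also have "\<dots> = sum ?E L + (\<Sum>i\<in>S - L. (xS$i * w$i)\<^sup>2)"
    by (simp add: sum.distrib sum.If_cases) (simp add: set_diff_eq)
  finally have nD: "(norm ?D)\<^sup>2 = sum ?E L + (\<Sum>i\<in>S - L. (xS$i * w$i)\<^sup>2)" .
  have "(\<Sum>i\<in>S - L. (xS$i * w$i)\<^sup>2) \<le> (\<Sum>i\<in>S - L. 2 * (?v$i)\<^sup>2 + 2 * ?E i)"
  proof (rule sum_mono)
    fix i assume "i \<in> S - L"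
    have eq: "xS$i * w$i = ?v$i - ?e$i * w$i" by (simp add: algebra_simps)
    have "2 * (?v$i)\<^sup>2 + 2 * ?E i - (xS$i * w$i)\<^sup>2 = (?v$i + ?e$i * w$i)\<^sup>2"
      unfolding eq by (simp add: power2_eq_square algebra_simps)
    moreover have "(?v$i + ?e$i * w$i)\<^sup>2 \<ge> 0" by (rule zero_le_power2)
    ultimately show "(xS$i * w$i)\<^sup>2 \<le> 2 * (?v$i)\<^sup>2 + 2 * ?E i" by linarith
  qed
  also have "\<dots> = 2 * (\<Sum>i\<in>S - L. (?v$i)\<^sup>2) + 2 * sum ?E (S - L)"
    by (simp add: sum.distrib sum_distrib_left)
  also have "(\<Sum>i\<in>S - L. (?v$i)\<^sup>2) \<le> (\<Sum>i\<in>L - S. (?v$i)\<^sup>2)"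
  proof (rule sum_compare)
    have fS: "finite S" and fL: "finite L" by auto
    have c1: "card (S - L) = card S - card (S \<inter> L)" by (rule card_Diff_subset_Int) simp
    have c2: "card (L - S) = card L - card (L \<inter> S)" by (rule card_Diff_subset_Int) simp
    show "card (S - L) = card (L - S)" unfolding c1 c2 cS cL by (simp add: Int_commute)
    fix i j assume "i \<in> S - L" "j \<in> L - S"
    then have "\<bar>?v$i\<bar> \<le> \<bar>?v$j\<bar>" using Lk by auto
    then show "(?v$i)\<^sup>2 \<le> (?v$j)\<^sup>2" by (simp add: abs_le_square_iff)
  qed auto
  also have "(\<Sum>i\<in>L - S. (?v$i)\<^sup>2) = sum ?E (L - S)"
    by (rule sum.cong) (auto simp: xs0)
  finally have bSL: "(\<Sum>i\<in>S - L. (xS$i * w$i)\<^sup>2) \<le> 2 * sum ?E (L - S) + 2 * sum ?E (S - L)"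
    by linarith
  have E0: "?E i \<ge> 0" for i by simp
  have "sum ?E (L - S) + sum ?E (S - L) = sum ?E ((L - S) \<union> (S - L))"
    by (rule sum.union_disjoint[symmetric]) auto
  also have "\<dots> \<le> sum ?E (L \<union> S)" by (rule sum_mono2) auto
  finally have b1: "sum ?E (L - S) + sum ?E (S - L) \<le> sum ?E (L \<union> S)" .
  have b2: "sum ?E L \<le> sum ?E (L \<union> S)" by (rule sum_mono2) auto
  have b3: "sum ?E (L \<union> S) \<le> (\<Sum>i\<in>L \<union> S. (?e$i)\<^sup>2)"
  proof (rule sum_mono)
    fix i
    have "w$i * w$i \<le> 1 * 1" using w01[of i] by (intro mult_mono) auto
    then have "(w$i)\<^sup>2 \<le> 1" by (simp add: power2_eq_square)
    then have "(?e$i)\<^sup>2 * (w$i)\<^sup>2 \<le> (?e$i)\<^sup>2 * 1" by (intro mult_left_mono) auto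
    then show "?E i \<le> (?e$i)\<^sup>2" by (simp add: power_mult_distrib)
  qed
  have "(norm ?D)\<^sup>2 \<le> 4 * (norm (restr (L \<union> S) ?e))\<^sup>2"
  proof -
    have "0 \<le> (\<Sum>i\<in>L \<union> S. (?e$i)\<^sup>2)" by (rule sum_nonneg) simp
    then show ?thesis unfolding nD norm_restr_sq using bSL b1 b2 b3 by linarith
  qed
  also have "\<dots> = (2 * norm (restr (L \<union> S) ?e))\<^sup>2" by (simp add: power_mult_distrib)
  finally show ?thesis by (rule power2_le_imp_le) simp
qed

lemma hadamard_add: "hadamard (a + b) w = hadamard a w + hadamard b w"
  by (simp add: vec_eq_iff algebra_simps)

lemma restr_supp: "supp z \<subseteq> S \<Longrightarrow> restr S z = z"
  by (auto simp: vec_eq_iff supp_def)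

lemma rot_d_bound:
  fixes A :: "real^'n^'m"
  assumes y: "y = A *v xS + nu" and sS: "supp xS \<subseteq> S" and cS: "card S = k"
    and feas: "ntrot_feasible k w"
    and opt: "\<forall>w'. ntrot_feasible k w' \<longrightarrow>
           (norm (y - A *v hadamard u w))\<^sup>2 \<le> (norm (y - A *v hadamard u w'))\<^sup>2"
  shows "\<exists>T. card T = k \<and> norm (A *v (xS - hadamard xS w))
     \<le> 2 * norm nu + norm (A *v restr S (u - xS)) + norm (A *v restr T (u - xS))"
proof -
  let ?e = "u - xS"
  define wS :: "real^'n" where "wS = (\<chi> i. if i \<in> S then 1 else 0)"
  have fS: "ntrot_feasible k wS"
    unfolding ntrot_feasible_def wS_def using sum_indicator_card[of S] cS by simp
  have hS: "hadamard u wS = restr S u" by (simp add: vec_eq_iff wS_def)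
  have "(norm (y - A *v hadamard u w))\<^sup>2 \<le> (norm (y - A *v restr S u))\<^sup>2"
    using opt fS hS by metis
  then have o1: "norm (y - A *v hadamard u w) \<le> norm (y - A *v restr S u)"
    by (rule power2_le_imp_le) simp
  have "restr S u = xS + restr S ?e" using restr_supp[OF sS] by (simp add: restr_diff)
  then have "y - A *v restr S u = nu - A *v restr S ?e"
    unfolding y by (simp add: matrix_vector_right_distrib)
  then have o2: "norm (y - A *v hadamard u w) \<le> norm nu + norm (A *v restr S ?e)"
    using o1 norm_triangle_ineq4[of nu "A *v restr S ?e"] by simp
  obtain T where T: "card T = k" "norm (A *v hadamard ?e w) \<le> norm (A *v restr T ?e)"
    using round[OF feas, of A ?e] by blast
  have hu: "hadamard u w = hadamard xS w + hadamard ?e w"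
    using hadamard_add[of xS ?e w] by simp
  have "A *v (xS - hadamard xS w) = (y - A *v hadamard u w) - nu + A *v hadamard ?e w"
    unfolding y hu by (simp add: matrix_vector_right_distrib matrix_vector_mult_diff_distrib)
  then have "norm (A *v (xS - hadamard xS w)) \<le> norm (y - A *v hadamard u w) + norm nu + norm (A *v hadamard ?e w)"
  proof -
    have "norm ((y - A *v hadamard u w) - nu + A *v hadamard ?e w) \<le> norm ((y - A *v hadamard u w) - nu) + norm (A *v hadamard ?e w)"
      by (rule norm_triangle_ineq)
    moreover have "norm ((y - A *v hadamard u w) - nu) \<le> norm (y - A *v hadamard u w) + norm nu"
      by (rule norm_triangle_ineq4)
    ultimately show ?thesis unfolding \<open>A *v (xS - hadamard xS w) = _\<close> by linarith
  qed
  then show ?thesis using o2 T by (intro exI[of _ T]) auto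
qed

lemma rip_upper_norm:
  fixes A :: "real^'n^'m"
  assumes "ksparse q z"
  shows "norm (A *v z) \<le> sqrt (1 + rip_const A q) * norm z"
proof -
  have "(norm (A *v z))\<^sup>2 \<le> (1 + rip_const A q) * (norm z)\<^sup>2" using rip_bounds[OF assms] by blast
  also have "\<dots> = (sqrt (1 + rip_const A q) * norm z)\<^sup>2"
    using rip_nonneg[of A q] by (simp add: power_mult_distrib)
  finally show ?thesis
    by (rule power2_le_imp_le) (use rip_nonneg[of A q] in simp)
qed

lemma rip_lower_norm:
  fixes A :: "real^'n^'m"
  assumes "ksparse q z" "rip_const A q \<le> 1"
  shows "sqrt (1 - rip_const A q) * norm z \<le> norm (A *v z)"
proof -
  have "(sqrt (1 - rip_const A q) * norm z)\<^sup>2 = (1 - rip_const A q) * (norm z)\<^sup>2"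
    using assms(2) by (simp add: power_mult_distrib)
  also have "\<dots> \<le> (norm (A *v z))\<^sup>2" using rip_bounds[OF assms(1)] by blast
  finally show ?thesis by (rule power2_le_imp_le) simp
qed

lemma arith_final:
  fixes r s d2 d3 T \<beta> Z N E1 E2 E3 :: real
  assumes r: "r \<ge> 1" and s: "s > 0" and Z: "Z \<ge> 0" and N: "N \<ge> 0" and b: "\<beta> \<ge> 0" and dT: "d3 + T \<ge> 0"
    and e1: "E1 \<le> (d3 + T) * Z + \<beta> * N" and e2: "E2 \<le> (d2 + T) * Z + \<beta> * N" and e3: "E3 \<le> (d3 + T) * Z + \<beta> * N"
  shows "2 * E1 + (s * (2 * N) + r * (E2 + E3)) \<le> (r * (d2 + 2 * d3 + 3 * T) + d3 + T) * Z + (s * (3 * \<beta> * (r / s) + 2) + \<beta>) * N"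
proof -
  have "E2 + E3 \<le> (d2 + d3 + 2 * T) * Z + 2 * \<beta> * N" using e2 e3 by (simp add: algebra_simps)
  then have 1: "r * (E2 + E3) \<le> r * ((d2 + d3 + 2 * T) * Z + 2 * \<beta> * N)"
    using r by (intro mult_left_mono) auto
  have "0 \<le> (d3 + T) * Z" using dT Z by (rule mult_nonneg_nonneg)
  moreover have "0 \<le> \<beta> * N" using b N by (rule mult_nonneg_nonneg)
  ultimately have 2: "0 \<le> (r - 1) * ((d3 + T) * Z + \<beta> * N)"
    using r by (intro mult_nonneg_nonneg) auto
  have 3: "s * (3 * \<beta> * (r / s) + 2) = 3 * \<beta> * r + 2 * s" using s by (simp add: field_simps)
  show ?thesis unfolding 3 using 1 2 e1 by (simp add: algebra_simps)
qed

lemma card_supp_le: "card (supp (z::real^'n)) \<le> card (UNIV::'n set)" by (rule card_mono) auto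

lemma step_bound:
  fixes A :: "real^'n^'m" and x xp xq :: "real^'n" and eta y :: "real^'m"
  assumes e: "e > 0" and l: "l > 0" and lm: "l \<le> e + (sigma_min A)\<^sup>2" and se: "(sigma_max A)\<^sup>2 \<le> e"
    and d3: "rip_const A (3*k) < 1"
    and y: "y = A *v x + eta" and S: "is_Lk k x S" and xp: "ksparse k xp"
    and st: "ntrot_step A y k e l xp xq"
  shows "norm (xq - restr S x) \<le> (sqrt ((1 + rip_const A k) / (1 - rip_const A (2*k))) *
              (rip_const A (2*k) + 2 * rip_const A (3*k) + 3 * (sigma_max A)\<^sup>2 - 3 * l * (sigma_max A)\<^sup>2 / (e + (sigma_max A)\<^sup>2))
            + rip_const A (3*k) + (sigma_max A)\<^sup>2 - l * (sigma_max A)\<^sup>2 / (e + (sigma_max A)\<^sup>2)) * norm (xp - restr S x)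
     + (1 / sqrt (1 - rip_const A (2*k)) * (3 * l * sigma_max A * sqrt (1 + rip_const A k) / (e + (sigma_max A)\<^sup>2) + 2)
            + l * sigma_max A / (e + (sigma_max A)\<^sup>2)) * norm (A *v restr (- S) x + eta)"
proof -
  let ?dk = "rip_const A k" and ?d2 = "rip_const A (2*k)" and ?d3 = "rip_const A (3*k)"
  let ?s1 = "sigma_max A" and ?s2 = "(sigma_max A)\<^sup>2"
  define xS where "xS = restr S x"
  define nu where "nu = A *v restr (- S) x + eta"
  define T where "T = ?s2 - l * ?s2 / (e + ?s2)"
  define \<beta> where "\<beta> = l * ?s1 / (e + ?s2)"
  have dk0: "0 \<le> ?dk" by (rule rip_nonneg)
  have dk2: "?dk \<le> ?d2" by (rule rip_mono) simp
  have d23: "?d2 \<le> ?d3" by (rule rip_mono) simp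
  have s1n: "0 \<le> ?s1" by (rule sigma_max_nonneg)
  have den: "e + ?s2 > 0" using e by (simp add: add_pos_nonneg)
  have xsplit: "x = xS + restr (- S) x" by (simp add: xS_def vec_eq_iff)
  have yS: "y = A *v xS + nu"
    unfolding y nu_def using xsplit by (metis matrix_vector_right_distrib add.assoc)
  have cS: "card S = k" using S by (simp add: is_Lk_def)
  have sS: "supp xS \<subseteq> S" unfolding xS_def by (rule supp_restr)
  define u where "u = ntrot_u A y e l xp"
  obtain w L where feas: "ntrot_feasible k w"
    and opt: "\<forall>w'. ntrot_feasible k w' \<longrightarrow> (norm (y - A *v hadamard u w))\<^sup>2 \<le> (norm (y - A *v hadamard u w'))\<^sup>2"
    and Lk: "is_Lk k (hadamard u w) L" and xq: "xq = restr L (hadamard u w)"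
    using st unfolding ntrot_step_def Let_def u_def by blast
  have cL: "card L = k" using Lk by (simp add: is_Lk_def)
  have uu: "u = xp + l *\<^sub>R (matrix_inv (transpose A ** A + e *\<^sub>R mat 1) *v (transpose A *v (nu - A *v (xp - xS))))"
  proof -
    have "y - A *v xp = nu - A *v (xp - xS)" unfolding yS by (simp add: matrix_vector_mult_diff_distrib)
    then show ?thesis unfolding u_def ntrot_u_def by simp
  qed
  let ?z = "xp - xS" and ?e = "u - xS"
  have fin: "finite X" for X :: "'n set" by simp
  have cxp: "card (supp xp) \<le> k" using xp by (simp add: ksparse_supp)
  have sz: "supp ?z \<subseteq> supp xp \<union> S" using supp_diff[of xp xS] sS by blast
  have cardb: "card (\<Omega> \<union> supp ?z) \<le> card \<Omega> + k + k" for \<Omega>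
  proof -
    have "card (\<Omega> \<union> supp ?z) \<le> card (\<Omega> \<union> (supp xp \<union> S))" using sz by (intro card_mono) auto
    also have "\<dots> \<le> card \<Omega> + card (supp xp \<union> S)" by (rule card_Un_le)
    also have "\<dots> \<le> card \<Omega> + (card (supp xp) + card S)" by (intro add_left_mono card_Un_le)
    finally show ?thesis using cxp cS by linarith
  qed
  have cardS: "card (S \<union> supp ?z) \<le> 2*k"
  proof -
    have "card (S \<union> supp ?z) \<le> card (S \<union> supp xp)" using sz by (intro card_mono) auto
    also have "\<dots> \<le> card S + card (supp xp)" by (rule card_Un_le)
    finally show ?thesis using cxp cS by linarith
  qed
  have cardLS: "card ((L \<union> S) \<union> supp ?z) \<le> 3*k"
  proof -
    have "card ((L \<union> S) \<union> supp ?z) \<le> card (L \<union> (supp xp \<union> S))" using sz by (intro card_mono) auto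
    also have "\<dots> \<le> card L + card (supp xp \<union> S)" by (rule card_Un_le)
    also have "\<dots> \<le> card L + (card (supp xp) + card S)" by (intro add_left_mono card_Un_le)
    finally show ?thesis using cxp cS cL by linarith
  qed
  have Eb: "norm (restr \<Omega> ?e) \<le> (rip_const A q + T) * norm ?z + \<beta> * norm nu"
    if "card (\<Omega> \<union> supp ?z) \<le> q" for \<Omega> q
    unfolding T_def \<beta>_def by (rule u_err[OF e l lm se uu that])
  have E1: "norm (restr (L \<union> S) ?e) \<le> (?d3 + T) * norm ?z + \<beta> * norm nu" by (rule Eb[OF cardLS])
  have E2: "norm (restr S ?e) \<le> (?d2 + T) * norm ?z + \<beta> * norm nu" by (rule Eb[OF cardS])
  have Lk': "\<And>i j. i \<in> L \<Longrightarrow> j \<notin> L \<Longrightarrow> \<bar>hadamard u w $ j\<bar> \<le> \<bar>hadamard u w $ i\<bar>"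
    using Lk by (auto simp: is_Lk_def)
  have w01: "\<And>i. 0 \<le> w$i \<and> w$i \<le> 1" using feas by (simp add: ntrot_feasible_def)
  have Dbound: "norm (restr L (hadamard u w) - hadamard xS w) \<le> 2 * norm (restr (L \<union> S) ?e)"
    by (rule rot_D_bound[OF sS cS cL Lk' w01])
  obtain T' where T': "card T' = k"
    "norm (A *v (xS - hadamard xS w)) \<le> 2 * norm nu + norm (A *v restr S ?e) + norm (A *v restr T' ?e)"
    using rot_d_bound[OF yS sS cS feas opt] by blast
  have cardT: "card (T' \<union> supp ?z) \<le> 3*k" using cardb[of T'] T'(1) by simp
  have E3: "norm (restr T' ?e) \<le> (?d3 + T) * norm ?z + \<beta> * norm nu" by (rule Eb[OF cardT])
  let ?a = "sqrt (1 + ?dk)" and ?b = "sqrt (1 - ?d2)" and ?c = "sqrt (1 - ?dk)"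
  have a1: "?a \<ge> 1" using dk0 by simp
  have b0: "?b > 0" using d23 d3 by simp
  have bc: "?b \<le> ?c" using dk2 by simp
  have b1: "?b \<le> 1" using dk2 dk0 by simp
  have spS: "ksparse k (restr S ?e)" by (rule ksparse_subset[OF supp_restr]) (simp add: cS)
  have spT: "ksparse k (restr T' ?e)" by (rule ksparse_subset[OF supp_restr]) (simp add: T'(1))
  define d where "d = xS - hadamard xS w"
  have spd: "ksparse k d"
  proof (rule ksparse_subset[of _ S])
    show "supp d \<subseteq> S" using sS by (auto simp: supp_def d_def)
  qed (simp add: cS)
  have dk1: "?dk \<le> 1" using dk2 d23 d3 by linarith
  have "?c * norm d \<le> norm (A *v d)" by (rule rip_lower_norm[OF spd dk1])
  also have "\<dots> \<le> 2 * norm nu + ?a * norm (restr S ?e) + ?a * norm (restr T' ?e)"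
    using T'(2) rip_upper_norm[OF spS, of A] rip_upper_norm[OF spT, of A] unfolding d_def by linarith
  finally have dc: "?c * norm d \<le> 2 * norm nu + ?a * (norm (restr S ?e) + norm (restr T' ?e))"
    by (simp add: algebra_simps)
  have "?b * norm d \<le> ?c * norm d" using bc by (intro mult_right_mono) auto
  with dc have "?b * norm d \<le> 2 * norm nu + ?a * (norm (restr S ?e) + norm (restr T' ?e))" by linarith
  then have dnorm: "norm d \<le> (1 / ?b) * (2 * norm nu) + (?a / ?b) * (norm (restr S ?e) + norm (restr T' ?e))"
    using b0 by (simp add: field_simps)
  have "xq - xS = (restr L (hadamard u w) - hadamard xS w) - d" unfolding xq d_def by simp
  then have "norm (xq - xS) \<le> norm (restr L (hadamard u w) - hadamard xS w) + norm d"
    by (metis norm_triangle_ineq4)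
  then have main: "norm (xq - xS) \<le> 2 * norm (restr (L \<union> S) ?e) + ((1 / ?b) * (2 * norm nu) + (?a / ?b) * (norm (restr S ?e) + norm (restr T' ?e)))"
    using Dbound dnorm by linarith
  have r1: "?a / ?b \<ge> 1" using a1 b1 b0 by (simp add: field_simps)
  have T0: "T \<ge> 0"
  proof -
    have "(sigma_min A)\<^sup>2 \<le> ?s2" using sigma_facts(3,4)[of A] by (intro power_mono) auto
    then have "l \<le> e + ?s2" using lm by linarith
    then have "l * ?s2 \<le> (e + ?s2) * ?s2" by (intro mult_right_mono) auto
    then have "l * ?s2 \<le> ?s2 * (e + ?s2)" by (simp only: mult.commute)
    then have "l * ?s2 / (e + ?s2) \<le> ?s2" using den by (simp add: pos_divide_le_eq)
    then show ?thesis unfolding T_def by linarith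
  qed
  have \<beta>0: "\<beta> \<ge> 0" unfolding \<beta>_def using l s1n den by simp
  have dT: "?d3 + T \<ge> 0" using T0 rip_nonneg[of A "3*k"] by linarith
  have s0: "1 / ?b > 0" using b0 by simp
  have fi: "2 * norm (restr (L \<union> S) ?e) + ((1 / ?b) * (2 * norm nu) + (?a / ?b) * (norm (restr S ?e) + norm (restr T' ?e)))
     \<le> ((?a / ?b) * (?d2 + 2 * ?d3 + 3 * T) + ?d3 + T) * norm ?z + ((1 / ?b) * (3 * \<beta> * ((?a / ?b) / (1 / ?b)) + 2) + \<beta>) * norm nu"
    by (rule arith_final[OF r1 s0 norm_ge_zero norm_ge_zero \<beta>0 dT E1 E2 E3])
  have eqr: "sqrt ((1 + ?dk) / (1 - ?d2)) = ?a / ?b" by (simp add: real_sqrt_divide)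
  have eqrho: "sqrt ((1 + ?dk) / (1 - ?d2)) * (?d2 + 2 * ?d3 + 3 * ?s2 - 3 * l * ?s2 / (e + ?s2))
      + ?d3 + ?s2 - l * ?s2 / (e + ?s2) = (?a / ?b) * (?d2 + 2 * ?d3 + 3 * T) + ?d3 + T"
    unfolding eqr T_def by (simp add: algebra_simps)
  have eqtau: "1 / ?b * (3 * l * ?s1 * ?a / (e + ?s2) + 2) + l * ?s1 / (e + ?s2)
      = (1 / ?b) * (3 * \<beta> * ((?a / ?b) / (1 / ?b)) + 2) + \<beta>"
    unfolding \<beta>_def using b0 by (simp add: field_simps)
  show ?thesis
    unfolding eqrho eqtau xS_def[symmetric] nu_def[symmetric]
    using main fi by linarith
qed

lemma ksparse_axis: "k \<ge> 1 \<Longrightarrow> ksparse k (axis i (1::real))"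
proof -
  assume k: "k \<ge> 1"
  have "supp (axis i (1::real)) \<subseteq> {i}" by (auto simp: supp_def axis_def)
  moreover have "card {i} \<le> k" using k by simp
  ultimately show ?thesis by (rule ksparse_subset)
qed

lemma s1_lower:
  fixes A :: "real^'m1^'m"
  assumes k: "k \<ge> 1"
  shows "1 - rip_const A k \<le> (sigma_max A)\<^sup>2"
proof -
  obtain i :: 'm1 where True by blast
  let ?z = "axis i (1::real)"
  have "(1 - rip_const A k) * (norm ?z)\<^sup>2 \<le> (norm (A *v ?z))\<^sup>2"
    using rip_bounds[OF ksparse_axis[OF k, of i], of A] by blast
  also have "\<dots> \<le> (sigma_max A * norm ?z)\<^sup>2"
    using A_bound[of A ?z] by (intro power_mono) auto
  finally show ?thesis by (simp add: power_mult_distrib)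
qed

lemma restr_sparse_id:
  assumes S: "is_Lk k x S" and sp: "ksparse k x"
  shows "restr S x = x"
proof (rule ccontr)
  assume "restr S x \<noteq> x"
  then obtain j where j: "j \<notin> S" "x$j \<noteq> 0" by (auto simp: vec_eq_iff split: if_splits)
  have "S \<subseteq> supp x"
  proof
    fix i assume "i \<in> S"
    then have "\<bar>x$j\<bar> \<le> \<bar>x$i\<bar>" using S j(1) by (auto simp: is_Lk_def)
    then show "i \<in> supp x" using j(2) by (auto simp: supp_def)
  qed
  moreover have "j \<in> supp x" using j(2) by (simp add: supp_def)
  ultimately have "insert j S \<subseteq> supp x" by blast
  then have "card (insert j S) \<le> card (supp x)" by (intro card_mono) auto
  then have "card S + 1 \<le> card (supp x)" using j(1) by simp
  moreover have "card S = k" using S by (simp add: is_Lk_def)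
  ultimately show False using sp by (simp add: ksparse_supp)
qed

lemma geom_conv:
  fixes a :: "nat \<Rightarrow> real"
  assumes r: "r < 1" and a0: "\<And>p. a p \<ge> 0" and step: "\<And>p. a (Suc p) \<le> r * a p"
  shows "a \<longlonglongrightarrow> 0"
proof -
  let ?r = "max r 0"
  have st: "a (Suc p) \<le> ?r * a p" for p
    using step[of p] a0[of p] by (metis max.cobounded1 mult_right_mono order_trans)
  have bound: "a p \<le> ?r ^ p * a 0" for p
  proof (induction p)
    case 0 then show ?case by simp
  next
    case (Suc p)
    have "a (Suc p) \<le> ?r * a p" by (rule st)
    also have "\<dots> \<le> ?r * (?r ^ p * a 0)" using Suc by (intro mult_left_mono) auto
    finally show ?case by (simp add: mult_ac)
  qed
  have "(\<lambda>p. ?r ^ p * a 0) \<longlonglongrightarrow> 0 * a 0"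
    by (intro tendsto_mult tendsto_const LIMSEQ_power_zero) (use r in auto)
  then have lim: "(\<lambda>p. ?r ^ p * a 0) \<longlonglongrightarrow> 0" by simp
  show ?thesis
    by (rule Lim_null_comparison[OF _ lim]) (use bound a0 in \<open>auto intro!: always_eventually\<close>)
qed

theorem theorem2:
  fixes A :: "real^'n^'m" and x :: "real^'n" and eta :: "real^'m" and y :: "real^'m"
    and k :: nat and S :: "'n set" and eps lam :: real and xs :: "nat \<Rightarrow> real^'n"
  defines "dk \<equiv> rip_const A k" and "d2k \<equiv> rip_const A (2*k)" and "d3k \<equiv> rip_const A (3*k)"
    and "s1 \<equiv> sigma_max A" and "sm \<equiv> sigma_min A"
  defines "gam \<equiv> 1 / (3 * sqrt ((1 + d3k) / (1 - d3k)) + 1)"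
  defines "rho \<equiv> sqrt ((1 + dk) / (1 - d2k)) *
              (d2k + 2 * d3k + 3 * s1\<^sup>2 - 3 * lam * s1\<^sup>2 / (eps + s1\<^sup>2))
            + d3k + s1\<^sup>2 - lam * s1\<^sup>2 / (eps + s1\<^sup>2)"
    and "tau \<equiv> 1 / sqrt (1 - d2k) * (3 * lam * s1 * sqrt (1 + dk) / (eps + s1\<^sup>2) + 2)
            + lam * s1 / (eps + s1\<^sup>2)"
  assumes mn: "CARD('m) < CARD('n)"
    and y: "y = A *v x + eta"
    and k: "k \<ge> 1"
    and S: "is_Lk k x S"
    and d3: "d3k < 0.2119"
    and eps: "eps > max (s1\<^sup>2) (((s1\<^sup>2 - sm\<^sup>2) / (gam - d3k) - 1) * s1\<^sup>2)"
    and lam1: "eps + s1\<^sup>2 + (d3k - gam) * (eps + s1\<^sup>2) / s1\<^sup>2 < lam"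
    and lam2: "lam \<le> eps + sm\<^sup>2"
    and seq: "ntrot_seq A y k eps lam xs"
  shows "rho < 1
    \<and> (\<forall>p. ksparse k (xs (Suc p)))
    \<and> (\<forall>p. ksparse k (xs p) \<longrightarrow>
          norm (xs (Suc p) - restr S x)
            \<le> rho * norm (xs p - restr S x) + tau * norm (A *v restr (- S) x + eta))
    \<and> (ksparse k x \<and> eta = 0 \<longrightarrow> xs \<longlonglongrightarrow> x)"
proof -
  have dk0: "0 \<le> dk" unfolding dk_def by (rule rip_nonneg)
  have dk2: "dk \<le> d2k" unfolding dk_def d2k_def by (rule rip_mono) simp
  have d23: "d2k \<le> d3k" unfolding d2k_def d3k_def by (rule rip_mono) simp
  have dk3: "dk \<le> d3k" using dk2 d23 by linarith
  have d3lt: "d3k < 1" using d3 by simp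
  have d3small: "d3k < 3/4" using d3 by simp
  have s1n: "0 \<le> s1" unfolding s1_def by (rule sigma_max_nonneg)
  let ?R3 = "sqrt ((1 + d3k) / (1 - d3k))"
  have R3: "?R3 \<ge> 1" using dk0 dk3 d3lt by simp
  have R3p: "3 * ?R3 + 1 > 0" using R3 by linarith
  have R34: "3 * ?R3 + 1 \<ge> 4" using R3 by linarith
  have gpos: "gam > 0" unfolding gam_def by (rule divide_pos_pos) (simp, rule R3p)
  have gle: "gam \<le> 1/4" unfolding gam_def by (rule frac_le) (use R34 in auto)
  have g1: "gam * (3 * ?R3 + 1) = 1" unfolding gam_def using R3p by simp
  have s2low: "1 - d3k \<le> s1\<^sup>2"
    using s1_lower[OF k, of A] dk3 unfolding s1_def dk_def by linarith
  have s2pos: "s1\<^sup>2 > 0" using s2low d3lt by linarith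
  have se: "s1\<^sup>2 \<le> eps" using eps by simp
  have e0: "eps > 0" using se s2pos by linarith
  have K0: "eps + s1\<^sup>2 > 0" using e0 s2pos by linarith
  have gds: "gam - d3k < s1\<^sup>2" using gle s2low d3small dk0 dk3 by linarith
  have "(gam - d3k) * (eps + s1\<^sup>2) < s1\<^sup>2 * (eps + s1\<^sup>2)" using gds K0 by (rule mult_strict_right_mono)
  then have "(gam - d3k) * (eps + s1\<^sup>2) < (eps + s1\<^sup>2) * s1\<^sup>2" by (simp only: mult.commute)
  then have "(gam - d3k) * (eps + s1\<^sup>2) / s1\<^sup>2 < eps + s1\<^sup>2" using s2pos by (simp add: pos_divide_less_eq)
  moreover have "(d3k - gam) * (eps + s1\<^sup>2) / s1\<^sup>2 = - ((gam - d3k) * (eps + s1\<^sup>2) / s1\<^sup>2)"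
  proof -
    have "d3k - gam = - (gam - d3k)" by simp
    then show ?thesis by (simp only: mult_minus_left minus_divide_left)
  qed
  ultimately have l0: "lam > 0" using lam1 by linarith
  define T where "T = s1\<^sup>2 - lam * s1\<^sup>2 / (eps + s1\<^sup>2)"
  have Tlt: "T < gam - d3k"
  proof -
    have "eps + s1\<^sup>2 - lam < (gam - d3k) * (eps + s1\<^sup>2) / s1\<^sup>2"
      using lam1 \<open>(d3k - gam) * (eps + s1\<^sup>2) / s1\<^sup>2 = _\<close> by linarith
    then have "s1\<^sup>2 * (eps + s1\<^sup>2 - lam) < (gam - d3k) * (eps + s1\<^sup>2)"
      using s2pos by (simp add: pos_less_divide_eq mult.commute)
    then have "s1\<^sup>2 * (eps + s1\<^sup>2 - lam) / (eps + s1\<^sup>2) < gam - d3k"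
      using K0 by (simp add: pos_divide_less_eq)
    moreover have "s1\<^sup>2 * (eps + s1\<^sup>2 - lam) / (eps + s1\<^sup>2) = T"
      unfolding T_def using K0 by (simp add: field_simps)
    ultimately show ?thesis by simp
  qed
  let ?R = "sqrt ((1 + dk) / (1 - d2k))"
  have rhoeq: "rho = ?R * (d2k + 2 * d3k + 3 * T) + d3k + T"
    unfolding rho_def T_def by (simp add: algebra_simps)
  have Rpos: "?R > 0" using dk0 d23 d3lt by simp
  have RR3: "?R \<le> ?R3"
  proof -
    have "(1 + dk) / (1 - d2k) \<le> (1 + d3k) / (1 - d3k)"
      by (rule frac_le) (use dk0 dk3 d23 d3lt in auto)
    then show ?thesis by simp
  qed
  have "?R * (d2k + 2 * d3k + 3 * T) < ?R * (d2k + 2 * d3k + 3 * (gam - d3k))"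
    using Rpos Tlt by (intro mult_strict_left_mono) auto
  also have "\<dots> \<le> ?R * (3 * gam)" using Rpos d23 by (intro mult_left_mono) auto
  also have "\<dots> \<le> ?R3 * (3 * gam)" using RR3 gpos by (intro mult_right_mono) auto
  finally have "rho < ?R3 * (3 * gam) + gam" unfolding rhoeq using Tlt by linarith
  also have "\<dots> = 1" using g1 by (simp add: algebra_simps)
  finally have rho1: "rho < 1" .
  have sparse: "ksparse k (xs (Suc p))" for p
  proof -
    have "ntrot_step A y k eps lam (xs p) (xs (Suc p))" using seq by (simp add: ntrot_seq_def)
    then obtain w L where "is_Lk k (hadamard (ntrot_u A y eps lam (xs p)) w) L"
      and "xs (Suc p) = restr L (hadamard (ntrot_u A y eps lam (xs p)) w)"
      unfolding ntrot_step_def Let_def by blast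
    then show ?thesis
      using ksparse_subset[OF supp_restr[of L "hadamard (ntrot_u A y eps lam (xs p)) w"], of k]
      by (simp add: is_Lk_def)
  qed
  have lm: "lam \<le> eps + (sigma_min A)\<^sup>2" using lam2 unfolding sm_def .
  have d3': "rip_const A (3*k) < 1" using d3lt unfolding d3k_def .
  have estimate: "norm (xs (Suc p) - restr S x) \<le> rho * norm (xs p - restr S x) + tau * norm (A *v restr (- S) x + eta)"
    if "ksparse k (xs p)" for p
  proof -
    have st: "ntrot_step A y k eps lam (xs p) (xs (Suc p))" using seq by (simp add: ntrot_seq_def)
    show ?thesis
      unfolding rho_def tau_def dk_def d2k_def d3k_def s1_def
      by (rule step_bound[OF e0 l0 lm _ d3' y S that st]) (use se in \<open>simp add: s1_def\<close>)
  qed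
  have conv: "xs \<longlonglongrightarrow> x" if xk: "ksparse k x" and eta0: "eta = 0"
  proof -
    have rx: "restr S x = x" by (rule restr_sparse_id[OF S xk])
    have rn: "restr (- S) x = 0"
    proof -
      have "restr S x + restr (- S) x = x" by (simp add: vec_eq_iff)
      then show ?thesis using rx by simp
    qed
    let ?a = "\<lambda>p. norm (xs (Suc p) - x)"
    have "?a (Suc p) \<le> rho * ?a p" for p
      using estimate[OF sparse[of p]] unfolding rx rn eta0 by simp
    then have "?a \<longlonglongrightarrow> 0" by (intro geom_conv[OF rho1]) auto
    then have "(\<lambda>p. xs (Suc p) - x) \<longlonglongrightarrow> 0" by (rule tendsto_norm_zero_cancel)
    then have "(\<lambda>p. (xs (Suc p) - x) + x) \<longlonglongrightarrow> 0 + x" by (intro tendsto_add tendsto_const)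
    then have "(\<lambda>p. xs (Suc p)) \<longlonglongrightarrow> x" by simp
    then show ?thesis by (rule LIMSEQ_imp_Suc)
  qed
  show ?thesis using rho1 sparse estimate conv by blast
qed

end
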